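(* For any natural number $n \geq 2$, $\{\omega^2, (\omega^2)^\star\} \leq_c \{\omega^n, (\omega^n)^\star\}$.
   Context: Structures have domains contained in $\omega$. For countable structures $\mathcal{A},\mathcal{B}$, the class $\{\mathcal{A},\mathcal{B}\}$ denotes the class of all structures (with domain $\subseteq\omega$) isomorphic to $\mathcal{A}$ or to $\mathcal{B}$. Linear orders are in the language $\{<\}$; $L^\star$ is the reverse of a linear order $L$; $\omega^n$ denotes ordinal exponentiation (as an order type). An enumeration operator $\Gamma$ is a c.e. set of pairs $(\alpha,\varphi)$ with $\alpha$ a finite set of basic (atomic or negated atomic) sentences of the input language with constants from $\omega$ and $\varphi$ a basic sentence of the output language with constants from $\omega$; $\Gamma(X)=\{\varphi : (\alpha,\varphi)\in\Gamma,\ \alpha\subseteq X\}$. $\Gamma$ is a computable embedding of $\mathcal{K}_0$ into $\mathcal{K}_1$ ($\mathcal{K}_0\leq_c\mathcal{K}_1$) if for every $\mathcal{A}\in\mathcal{K}_0$, $\Gamma$ applied to the atomic diagram of $\mathcal{A}$ is the atomic diagram of a structure $\Gamma(\mathcal{A})\in\mathcal{K}_1$, and for all $\mathcal{A},\mathcal{B}\in\mathcal{K}_0$, $\mathcal{A}\cong\mathcal{B}$ iff $\Gamma(\mathcal{A})\cong\Gamma(\mathcal{B})$. *)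

theory Defs
  imports Main "HOL-Library.Nat_Bijection"
begin

datatype recf =
    Zero
  | Succ
  | Proj nat
  | Comp recf "recf list"
  | PrimRec recf recf
  | Minim recf

inductive eval :: "recf \<Rightarrow> nat list \<Rightarrow> nat \<Rightarrow> bool" where
  eval_Zero: "eval Zero xs 0"
| eval_Succ: "eval Succ (x # xs) (Suc x)"
| eval_Proj: "i < length xs \<Longrightarrow> eval (Proj i) xs (xs ! i)"
| eval_Comp: "list_all2 (\<lambda>g y. eval g xs y) gs ys \<Longrightarrow> eval f ys z \<Longrightarrow> eval (Comp f gs) xs z"
| eval_PrimRec0: "eval f xs z \<Longrightarrow> eval (PrimRec f g) (0 # xs) z"
| eval_PrimRecS: "eval (PrimRec f g) (k # xs) r \<Longrightarrow> eval g (r # k # xs) z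
                   \<Longrightarrow> eval (PrimRec f g) (Suc k # xs) z"
| eval_Minim: "eval f (y # xs) 0 \<Longrightarrow> (\<forall>u<y. \<exists>v. v \<noteq> 0 \<and> eval f (u # xs) v)
                   \<Longrightarrow> eval (Minim f) xs y"

definition ce :: "nat set \<Rightarrow> bool" where
  "ce A \<longleftrightarrow> (\<exists>f. A = {x. \<exists>y. eval f [x] y})"

datatype sent = Eq nat nat | Less nat nat | NEq nat nat | NLess nat nat

definition sent_decode :: "nat \<Rightarrow> sent" where
  "sent_decode n = (let (a, b) = prod_decode (n div 4) in
     if n mod 4 = 0 then Eq a b else if n mod 4 = 1 then Less a b
     else if n mod 4 = 2 then NEq a b else NLess a b)"

type_synonym struc = "nat set \<times> (nat \<times> nat) set"

definition diag :: "struc \<Rightarrow> sent set" where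
  "diag A = (case A of (D, R) \<Rightarrow>
      {Eq a a | a. a \<in> D}
    \<union> {NEq a b | a b. a \<in> D \<and> b \<in> D \<and> a \<noteq> b}
    \<union> {Less a b | a b. a \<in> D \<and> b \<in> D \<and> (a, b) \<in> R}
    \<union> {NLess a b | a b. a \<in> D \<and> b \<in> D \<and> (a, b) \<notin> R})"

definition iso :: "'a set \<times> ('a \<times> 'a) set \<Rightarrow> 'b set \<times> ('b \<times> 'b) set \<Rightarrow> bool" where
  "iso A B \<longleftrightarrow> (\<exists>f. bij_betw f (fst A) (fst B) \<and>
      (\<forall>x\<in>fst A. \<forall>y\<in>fst A. (x, y) \<in> snd A \<longleftrightarrow> (f x, f y) \<in> snd B))"

text \<open>The class {A, B}: all structures with domain \<subseteq> \<omega> isomorphic to A or to B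
  (A, B given as relational structures on some carrier).\<close>
definition cls :: "'a set \<times> ('a \<times> 'a) set \<Rightarrow> 'a set \<times> ('a \<times> 'a) set \<Rightarrow> struc set" where
  "cls A B = {S. iso S A \<or> iso S B}"

definition rev_order :: "'a set \<times> ('a \<times> 'a) set \<Rightarrow> 'a set \<times> ('a \<times> 'a) set" where
  "rev_order L = (fst L, (snd L)\<inverse>)"

text \<open>The order type \<omega>^n (ordinal exponentiation), realised by the recursion
  \<omega>^0 = 1 and \<omega>^(k+1) = \<omega>^k \<cdot> \<omega> (ordinal product: \<omega> copies of \<omega>^k).
  Elements of \<omega>^(k+1) are lists m # xs, with m \<in> \<omega> indexing the copy and xs \<in> \<omega>^k.\<close>
fun omega_pow_rel :: "nat \<Rightarrow> (nat list \<times> nat list) set" where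
  "omega_pow_rel 0 = {}"
| "omega_pow_rel (Suc k) =
     {(m # xs, m' # xs') | m xs m' xs'.
        length xs = k \<and> length xs' = k \<and> (m < m' \<or> (m = m' \<and> (xs, xs') \<in> omega_pow_rel k))}"

definition omega_pow :: "nat \<Rightarrow> nat list set \<times> (nat list \<times> nat list) set" where
  "omega_pow n = ({xs. length xs = n}, omega_pow_rel n)"

definition enum_op :: "(sent set \<times> sent) set \<Rightarrow> bool" where
  "enum_op \<Gamma> \<longleftrightarrow> (\<exists>W. ce W \<and>
     \<Gamma> = {(sent_decode ` set_decode (fst (prod_decode w)), sent_decode (snd (prod_decode w))) | w. w \<in> W})"

definition apply_op :: "(sent set \<times> sent) set \<Rightarrow> sent set \<Rightarrow> sent set" where
  "apply_op \<Gamma> X = {\<phi>. \<exists>\<alpha>. (\<alpha>, \<phi>) \<in> \<Gamma> \<and> \<alpha> \<subseteq> X}"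

definition comp_embedding :: "(sent set \<times> sent) set \<Rightarrow> struc set \<Rightarrow> struc set \<Rightarrow> bool" where
  "comp_embedding \<Gamma> K0 K1 \<longleftrightarrow> enum_op \<Gamma> \<and>
     (\<forall>A\<in>K0. \<exists>B\<in>K1. apply_op \<Gamma> (diag A) = diag B) \<and>
     (\<forall>A\<in>K0. \<forall>B\<in>K0. \<forall>A' B'. apply_op \<Gamma> (diag A) = diag A' \<longrightarrow> apply_op \<Gamma> (diag B) = diag B'
        \<longrightarrow> (iso A B \<longleftrightarrow> iso A' B'))"

definition comp_reducible :: "struc set \<Rightarrow> struc set \<Rightarrow> bool" (infix "\<le>\<^sub>c" 50) where
  "K0 \<le>\<^sub>c K1 \<longleftrightarrow> (\<exists>\<Gamma>. comp_embedding \<Gamma> K0 K1)"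

end

theory Submission
  imports Defs
begin

definition slin :: "'a set \<Rightarrow> ('a \<times> 'a) set \<Rightarrow> bool" where
  "slin A r \<longleftrightarrow> (\<forall>x\<in>A. (x,x) \<notin> r) \<and> (\<forall>x\<in>A. \<forall>y\<in>A. \<forall>z\<in>A. (x,y)\<in>r \<longrightarrow> (y,z)\<in>r \<longrightarrow> (x,z)\<in>r)
     \<and> (\<forall>x\<in>A. \<forall>y\<in>A. x \<noteq> y \<longrightarrow> (x,y)\<in>r \<or> (y,x)\<in>r)"

lemma slin_irr: "slin A r \<Longrightarrow> x \<in> A \<Longrightarrow> (x,x) \<notin> r"
  unfolding slin_def by blast
lemma slin_trans: "slin A r \<Longrightarrow> x \<in> A \<Longrightarrow> y \<in> A \<Longrightarrow> z \<in> A \<Longrightarrow> (x,y) \<in> r \<Longrightarrow> (y,z) \<in> r \<Longrightarrow> (x,z) \<in> r"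
  unfolding slin_def by blast
lemma slin_total: "slin A r \<Longrightarrow> x \<in> A \<Longrightarrow> y \<in> A \<Longrightarrow> x \<noteq> y \<Longrightarrow> (x,y) \<notin> r \<Longrightarrow> (y,x) \<in> r"
  unfolding slin_def by blast
lemma slin_asym: "slin A r \<Longrightarrow> x \<in> A \<Longrightarrow> y \<in> A \<Longrightarrow> (x,y) \<in> r \<Longrightarrow> (y,x) \<notin> r"
  unfolding slin_def by blast

definition wfon :: "'a set \<Rightarrow> ('a \<times> 'a) set \<Rightarrow> bool" where
  "wfon A r \<longleftrightarrow> wf {(x,y). x\<in>A \<and> y\<in>A \<and> (x,y)\<in>r}"

definition refl_of :: "'a set \<Rightarrow> ('a \<times> 'a) set \<Rightarrow> ('a \<times> 'a) set" where
  "refl_of A r = {(x,y). x\<in>A \<and> y\<in>A \<and> (x = y \<or> (x,y)\<in>r)}"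

definition smono :: "'a set \<Rightarrow> ('a \<times> 'a) set \<Rightarrow> 'b set \<Rightarrow> ('b \<times> 'b) set \<Rightarrow> ('a \<Rightarrow> 'b) \<Rightarrow> bool" where
  "smono A r B s g \<longleftrightarrow> (\<forall>x\<in>A. g x \<in> B) \<and> (\<forall>x\<in>A. \<forall>y\<in>A. (x,y)\<in>r \<longrightarrow> (g x, g y)\<in>s)"

lemma Field_refl_of: "Field (refl_of A r) = A"
  unfolding Field_def refl_of_def by auto

lemma WO_refl_of:
  assumes "slin A r" "wfon A r"
  shows "Well_order (refl_of A r)"
proof -
  have s1: "\<forall>x\<in>A. (x,x) \<notin> r" and s2: "\<forall>x\<in>A. \<forall>y\<in>A. \<forall>z\<in>A. (x,y)\<in>r \<longrightarrow> (y,z)\<in>r \<longrightarrow> (x,z)\<in>r"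
    and s3: "\<forall>x\<in>A. \<forall>y\<in>A. x \<noteq> y \<longrightarrow> (x,y)\<in>r \<or> (y,x)\<in>r"
    using assms(1) unfolding slin_def by blast+
  have "refl_of A r \<subseteq> A \<times> A" unfolding refl_of_def by auto
  moreover have "refl_on A (refl_of A r)" unfolding refl_on_def refl_of_def by auto
  moreover have "trans (refl_of A r)"
  proof (rule transI)
    fix x y z assume "(x, y) \<in> refl_of A r" "(y, z) \<in> refl_of A r"
    then show "(x, z) \<in> refl_of A r" using s2 unfolding refl_of_def by auto
  qed
  moreover have "antisym (refl_of A r)"
  proof (rule antisymI)
    fix x y assume "(x, y) \<in> refl_of A r" "(y, x) \<in> refl_of A r"
    then show "x = y" using s1 s2 unfolding refl_of_def by blast
  qed
  moreover have "total_on A (refl_of A r)"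
    unfolding total_on_def refl_of_def using s3 by auto
  ultimately have lin: "linear_order_on A (refl_of A r)"
    unfolding order_on_defs by blast
  have "refl_of A r - Id \<subseteq> {(x,y). x\<in>A \<and> y\<in>A \<and> (x,y)\<in>r}"
    unfolding refl_of_def by auto
  then have "wf (refl_of A r - Id)" using assms(2) unfolding wfon_def by (rule wf_subset[rotated])
  with lin show ?thesis unfolding well_order_on_def Field_refl_of by blast
qed

lemma selfmap_ge:
  assumes "slin B s" "wfon B s" "smono B s B s k" "b \<in> B"
  shows "(k b, b) \<notin> s"
proof
  assume kb: "(k b, b) \<in> s"
  let ?M = "{b\<in>B. (k b, b) \<in> s}"
  let ?W = "{(x,y). x\<in>B \<and> y\<in>B \<and> (x,y)\<in>s}"
  have w: "wf ?W" using assms(2) unfolding wfon_def .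
  have bM: "b \<in> ?M" using kb assms(4) by auto
  have ex: "\<exists>z\<in>?M. \<forall>y. (y, z) \<in> ?W \<longrightarrow> y \<notin> ?M"
    using wf_eq_minimal[THEN iffD1, OF w, rule_format, OF bM] .
  then obtain z where z: "z \<in> ?M" and zmin: "\<And>y. (y, z) \<in> ?W \<Longrightarrow> y \<notin> ?M"
    by blast
  have kz: "k z \<in> B" using z assms(3) unfolding smono_def by auto
  have "(k z, z) \<in> ?W" using z kz by auto
  moreover have "k z \<in> ?M" using z kz assms(3) unfolding smono_def by auto
  ultimately show False using zmin[of "k z"] by simp
qed

lemma wfon_pull:
  assumes "wfon B s" "smono A r B s g"
  shows "wfon A r"
proof -
  have "{(x,y). x\<in>A \<and> y\<in>A \<and> (x,y)\<in>r} \<subseteq> inv_image {(x,y). x\<in>B \<and> y\<in>B \<and> (x,y)\<in>s} g"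
    using assms(2) unfolding smono_def inv_image_def by auto
  moreover have "wf (inv_image {(x,y). x\<in>B \<and> y\<in>B \<and> (x,y)\<in>s} g)"
    using assms(1) unfolding wfon_def by (rule wf_inv_image)
  ultimately show ?thesis unfolding wfon_def using wf_subset by blast
qed

lemma not_ordLess:
  assumes slA: "slin A r" and wA: "wfon A r" and slB: "slin B s" and wB: "wfon B s"
    and h: "smono B s A r h"
  shows "\<not> ((refl_of A r, refl_of B s) \<in> ordLess)"
proof
  assume "(refl_of A r, refl_of B s) \<in> ordLess"
  then obtain e where emb: "embed (refl_of A r) (refl_of B s) e"
    and nb: "\<not> bij_betw e A B"
  proof -
    from \<open>(refl_of A r, refl_of B s) \<in> ordLess\<close> obtain e where
      "embed (refl_of A r) (refl_of B s) e" "\<not> bij_betw e (Field (refl_of A r)) (Field (refl_of B s))"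
      unfolding ordLess_def embedS_def by blast
    then show ?thesis using that unfolding Field_refl_of by blast
  qed
  have woA: "Well_order (refl_of A r)" using WO_refl_of[OF slA wA] .
  have eB: "\<And>x. x \<in> A \<Longrightarrow> e x \<in> B"
  proof -
    fix x assume "x \<in> A"
    then have "e x \<in> Field (refl_of B s)" by (intro embed_in_Field[OF emb]) (simp add: Field_refl_of)
    then show "e x \<in> B" by (simp add: Field_refl_of)
  qed
  have inj: "inj_on e A" using embed_inj_on[OF woA emb] by (simp add: Field_refl_of)
  have cmp: "compat (refl_of A r) (refl_of B s) e" using embed_compat[OF emb] .
  have "e ` A \<noteq> B" using nb inj unfolding bij_betw_def by blast
  moreover have "e ` A \<subseteq> B" using eB by auto
  ultimately obtain b where b: "b \<in> B" "b \<notin> e ` A" by blast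
  have below: "\<And>x. x \<in> A \<Longrightarrow> (e x, b) \<in> s"
  proof -
    fix x assume x: "x \<in> A"
    have "e x \<noteq> b" using b x by auto
    moreover have "(b, e x) \<notin> s"
    proof
      assume "(b, e x) \<in> s"
      then have "b \<in> under (refl_of B s) (e x)" using b eB[OF x] unfolding under_def refl_of_def by auto
      moreover have "bij_betw e (under (refl_of A r) x) (under (refl_of B s) (e x))"
        using emb x unfolding embed_def Field_refl_of by blast
      ultimately have "b \<in> e ` under (refl_of A r) x" unfolding bij_betw_def by auto
      moreover have "under (refl_of A r) x \<subseteq> A" unfolding under_def refl_of_def by auto
      ultimately show False using b by auto
    qed
    ultimately show "(e x, b) \<in> s" using slin_total[OF slB b(1) eB[OF x]] by blast
  qed
  have "smono B s B s (e \<circ> h)"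
    unfolding smono_def
  proof (intro conjI ballI impI)
    fix x assume "x \<in> B" then show "(e \<circ> h) x \<in> B" using h eB unfolding smono_def by auto
  next
    fix x y assume xy: "x \<in> B" "y \<in> B" "(x, y) \<in> s"
    then have hxy: "(h x, h y) \<in> r" "h x \<in> A" "h y \<in> A" using h unfolding smono_def by auto
    then have "h x \<noteq> h y" using slin_irr[OF slA] by auto
    then have "e (h x) \<noteq> e (h y)" using inj hxy unfolding inj_on_def by auto
    moreover have "(e (h x), e (h y)) \<in> refl_of B s"
      using cmp hxy unfolding compat_def refl_of_def by auto
    ultimately show "((e \<circ> h) x, (e \<circ> h) y) \<in> s" unfolding refl_of_def by auto
  qed
  moreover have "((e \<circ> h) b, b) \<in> s" using below h b unfolding smono_def by auto
  ultimately show False using selfmap_ge[OF slB wB _ b(1)] by blast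
qed

lemma iso_from_bnf:
  assumes slA: "slin A r" and slB: "slin B s" and bi: "BNF_Wellorder_Embedding.iso (refl_of A r) (refl_of B s) f"
  shows "iso (A, r) (B, s)"
proof -
  have bij: "bij_betw f A B" using bi unfolding BNF_Wellorder_Embedding.iso_def Field_refl_of by blast
  have cmp: "compat (refl_of A r) (refl_of B s) f" using bi embed_compat unfolding BNF_Wellorder_Embedding.iso_def by blast
  have "\<forall>x\<in>A. \<forall>y\<in>A. (x, y) \<in> r \<longleftrightarrow> (f x, f y) \<in> s"
  proof (intro ballI iffI)
    fix x y assume xy: "x \<in> A" "y \<in> A" "(x, y) \<in> r"
    then have "x \<noteq> y" using slA unfolding slin_def by auto
    then have "f x \<noteq> f y" using bij xy unfolding bij_betw_def inj_on_def by auto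
    moreover have "(f x, f y) \<in> refl_of B s" using cmp xy unfolding compat_def refl_of_def by auto
    ultimately show "(f x, f y) \<in> s" unfolding refl_of_def by auto
  next
    fix x y assume xy: "x \<in> A" "y \<in> A" "(f x, f y) \<in> s"
    have fx: "f x \<in> B" "f y \<in> B" using bij xy unfolding bij_betw_def by auto
    have "x \<noteq> y" using xy fx slB unfolding slin_def by auto
    moreover have "(y, x) \<notin> r"
    proof
      assume "(y, x) \<in> r"
      then have "f y \<noteq> f x" using slA xy bij unfolding slin_def bij_betw_def inj_on_def by auto
      moreover have "(f y, f x) \<in> refl_of B s" using cmp xy \<open>(y,x)\<in>r\<close> unfolding compat_def refl_of_def by auto
      ultimately have "(f y, f x) \<in> s" unfolding refl_of_def by auto
      then show False using xy fx slB unfolding slin_def by blast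
    qed
    ultimately show "(x, y) \<in> r" using slA xy unfolding slin_def by blast
  qed
  then show ?thesis unfolding iso_def using bij by auto
qed

lemma sb_iso:
  assumes slA: "slin A r" and slB: "slin B s" and wB: "wfon B s"
    and g: "smono A r B s g" and h: "smono B s A r h"
  shows "iso (A, r) (B, s)"
proof -
  have wA: "wfon A r" using wfon_pull[OF wB g] .
  have woA: "Well_order (refl_of A r)" using WO_refl_of[OF slA wA] .
  have woB: "Well_order (refl_of B s)" using WO_refl_of[OF slB wB] .
  have n1: "\<not> ((refl_of A r, refl_of B s) \<in> ordLess)" using not_ordLess[OF slA wA slB wB h] .
  have n2: "\<not> ((refl_of B s, refl_of A r) \<in> ordLess)" using not_ordLess[OF slB wB slA wA g] .
  have "(refl_of A r, refl_of B s) \<in> ordIso"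
  proof (cases "(refl_of A r, refl_of B s) \<in> ordLeq")
    case True then show ?thesis using n1 ordLeq_iff_ordLess_or_ordIso by blast
  next
    case False
    then have "(refl_of B s, refl_of A r) \<in> ordLeq" using ordLeq_total[OF woA woB] by blast
    then show ?thesis using n2 ordLeq_iff_ordLess_or_ordIso ordIso_symmetric by blast
  qed
  then obtain f where "BNF_Wellorder_Embedding.iso (refl_of A r) (refl_of B s) f"
    unfolding ordIso_def by blast
  then show ?thesis using iso_from_bnf[OF slA slB] by blast
qed


fun lexl :: "('a \<times> 'a) set \<Rightarrow> 'a list \<Rightarrow> 'a list \<Rightarrow> bool" where
  "lexl R (x # xs) (y # ys) = ((x, y) \<in> R \<or> (x = y \<and> lexl R xs ys))"
| "lexl R _ _ = False"

definition "lessr = {(a::nat, b). a < b}"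

lemma opr_lexl: "(xs, ys) \<in> omega_pow_rel k \<longleftrightarrow> length xs = k \<and> length ys = k \<and> lexl lessr xs ys"
proof (induction k arbitrary: xs ys)
  case 0 then show ?case by (cases xs; cases ys) auto
next
  case (Suc k) then show ?case by (cases xs; cases ys) (auto simp: lessr_def)
qed

definition "lists_over A k = {xs. length xs = k \<and> set xs \<subseteq> A}"

lemma lexl_irr: "(\<forall>x\<in>set xs. (x,x) \<notin> R) \<Longrightarrow> \<not> lexl R xs xs"
  by (induction xs) auto

lemma lexl_trans: "slin A R \<Longrightarrow> set xs \<subseteq> A \<Longrightarrow> set ys \<subseteq> A \<Longrightarrow> set zs \<subseteq> A \<Longrightarrow>
   lexl R xs ys \<Longrightarrow> lexl R ys zs \<Longrightarrow> lexl R xs zs"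
proof (induction xs arbitrary: ys zs)
  case Nil then show ?case by simp
next
  case (Cons x xs)
  obtain y ys' where ys: "ys = y # ys'" using Cons.prems(5) by (cases ys) auto
  obtain z zs' where zs: "zs = z # zs'" using Cons.prems(6) by (cases zs) auto
  show ?case using Cons.prems Cons.IH[of ys' zs'] slin_trans[OF Cons.prems(1), of x y z] unfolding ys zs
    by auto
qed

lemma lexl_total: "slin A R \<Longrightarrow> set xs \<subseteq> A \<Longrightarrow> set ys \<subseteq> A \<Longrightarrow> length xs = length ys \<Longrightarrow> xs \<noteq> ys \<Longrightarrow>
   lexl R xs ys \<or> lexl R ys xs"
proof (induction xs arbitrary: ys)
  case Nil then show ?case by simp
next
  case (Cons x xs)
  obtain y ys' where ys: "ys = y # ys'" using Cons.prems(4) by (cases ys) auto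
  show ?case
  proof (cases "x = y")
    case True then show ?thesis using Cons.prems Cons.IH[of ys'] unfolding ys by auto
  next
    case False then show ?thesis using Cons.prems slin_total[OF Cons.prems(1), of x y] unfolding ys by auto
  qed
qed

lemma slinI:
  assumes "\<And>x. x \<in> A \<Longrightarrow> (x,x) \<notin> r"
    "\<And>x y z. x \<in> A \<Longrightarrow> y \<in> A \<Longrightarrow> z \<in> A \<Longrightarrow> (x,y) \<in> r \<Longrightarrow> (y,z) \<in> r \<Longrightarrow> (x,z) \<in> r"
    "\<And>x y. x \<in> A \<Longrightarrow> y \<in> A \<Longrightarrow> x \<noteq> y \<Longrightarrow> (x,y) \<in> r \<or> (y,x) \<in> r"
  shows "slin A r"
  unfolding slin_def using assms by blast

lemma slin_lexl: "slin A R \<Longrightarrow> slin (lists_over A k) {(xs, ys). lexl R xs ys}"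
proof (rule slinI)
  fix x assume "slin A R" "x \<in> lists_over A k"
  then show "(x, x) \<notin> {(xs, ys). lexl R xs ys}"
    using lexl_irr[of x R] slin_irr[of A R] unfolding lists_over_def by auto
next
  fix x y z assume "slin A R" "x \<in> lists_over A k" "y \<in> lists_over A k" "z \<in> lists_over A k"
    "(x, y) \<in> {(xs, ys). lexl R xs ys}" "(y, z) \<in> {(xs, ys). lexl R xs ys}"
  then show "(x, z) \<in> {(xs, ys). lexl R xs ys}"
    using lexl_trans[of A R x y z] unfolding lists_over_def by auto
next
  fix x y assume "slin A R" "x \<in> lists_over A k" "y \<in> lists_over A k" "x \<noteq> y"
  then show "(x, y) \<in> {(xs, ys). lexl R xs ys} \<or> (y, x) \<in> {(xs, ys). lexl R xs ys}"
    using lexl_total[of A R x y] unfolding lists_over_def by auto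
qed

lemma slin_pull:
  assumes s: "slin C q" and inj: "inj_on h A" and hC: "\<And>x. x \<in> A \<Longrightarrow> h x \<in> C"
    and hr: "\<And>x y. x \<in> A \<Longrightarrow> y \<in> A \<Longrightarrow> (x, y) \<in> r \<longleftrightarrow> (h x, h y) \<in> q"
  shows "slin A r"
proof (rule slinI)
  fix x assume x: "x \<in> A"
  have "(h x, h x) \<notin> q" by (rule slin_irr[OF s hC[OF x]])
  then show "(x, x) \<notin> r" using hr[OF x x] by simp
next
  fix x y z assume xyz: "x \<in> A" "y \<in> A" "z \<in> A" "(x, y) \<in> r" "(y, z) \<in> r"
  have "(h x, h z) \<in> q"
    by (rule slin_trans[OF s hC[OF xyz(1)] hC[OF xyz(2)] hC[OF xyz(3)]])
       (use xyz hr in auto)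
  then show "(x, z) \<in> r" using hr[OF xyz(1) xyz(3)] by simp
next
  fix x y assume xy: "x \<in> A" "y \<in> A" "x \<noteq> y"
  then have "h x \<noteq> h y" using inj unfolding inj_on_def by auto
  then have "(h x, h y) \<in> q \<or> (h y, h x) \<in> q"
    using slin_total[OF s hC[OF xy(1)] hC[OF xy(2)]] by blast
  then show "(x, y) \<in> r \<or> (y, x) \<in> r" using hr xy by auto
qed

lemma slin_lessr: "slin UNIV lessr"
  unfolding slin_def lessr_def by auto

lemma slin_omega: "slin (fst (omega_pow k)) (snd (omega_pow k))"
proof (rule slin_pull[OF slin_lexl[OF slin_lessr, of k], where h = id])
  show "inj_on id (fst (omega_pow k))" by simp
  show "\<And>x. x \<in> fst (omega_pow k) \<Longrightarrow> id x \<in> lists_over UNIV k"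
    by (simp add: omega_pow_def lists_over_def)
  show "\<And>x y. x \<in> fst (omega_pow k) \<Longrightarrow> y \<in> fst (omega_pow k) \<Longrightarrow>
     (x, y) \<in> snd (omega_pow k) \<longleftrightarrow> (id x, id y) \<in> {(xs, ys). lexl lessr xs ys}"
    by (simp add: omega_pow_def opr_lexl)
qed

lemma wf_opr: "wf (omega_pow_rel k)"
proof (induction k)
  case 0 then show ?case by simp
next
  case (Suc k)
  have "omega_pow_rel (Suc k) \<subseteq> inv_image (less_than <*lex*> omega_pow_rel k) (\<lambda>xs. (hd xs, tl xs))"
    by auto
  moreover have "wf (inv_image (less_than <*lex*> omega_pow_rel k) (\<lambda>xs. (hd xs, tl xs)))"
    using Suc by (intro wf_inv_image wf_lex_prod wf_less_than)
  ultimately show ?case using wf_subset by blast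
qed

lemma wfon_omega: "wfon (fst (omega_pow k)) (snd (omega_pow k))"
  unfolding wfon_def omega_pow_def using wf_opr[of k] by (auto intro: wf_subset)


fun tdec :: "nat \<Rightarrow> nat \<Rightarrow> nat list" where
  "tdec 0 e = [e]"
| "tdec (Suc k) e = fst (prod_decode e) # tdec k (snd (prod_decode e))"

fun tenc :: "nat list \<Rightarrow> nat" where
  "tenc [] = 0"
| "tenc [x] = x"
| "tenc (x # y # xs) = prod_encode (x, tenc (y # xs))"

lemma length_tdec[simp]: "length (tdec k e) = Suc k"
  by (induction k arbitrary: e) auto

lemma tdec_tenc: "length xs = Suc k \<Longrightarrow> tdec k (tenc xs) = xs"
proof (induction k arbitrary: xs)
  case 0 then show ?case by (cases xs) auto
next
  case (Suc k)
  then obtain x y ys where "xs = x # y # ys" by (cases xs; cases "tl xs") auto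
  with Suc show ?case by auto
qed

lemma tdec_inj: "tdec k e = tdec k e' \<Longrightarrow> e = e'"
proof (induction k arbitrary: e e')
  case 0 then show ?case by simp
next
  case (Suc k)
  then have "fst (prod_decode e) = fst (prod_decode e')" "snd (prod_decode e) = snd (prod_decode e')" by auto
  then have "prod_decode e = prod_decode e'" by (simp add: prod_eq_iff)
  then show ?case by simp
qed

lemma pd_le: "fst (prod_decode e) \<le> e" "snd (prod_decode e) \<le> e"
  by (metis le_prod_encode_1 prod.collapse prod_decode_inverse)
     (metis le_prod_encode_2 prod.collapse prod_decode_inverse)

lemma tdec_le: "z \<in> set (tdec k e) \<Longrightarrow> z \<le> e"
proof (induction k arbitrary: e)
  case 0 then show ?case by simp
next
  case (Suc k)
  then show ?case using pd_le[of e] by (auto dest: Suc.IH)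
qed

definition inDom :: "nat \<Rightarrow> nat set \<Rightarrow> (nat \<times> nat) set \<Rightarrow> nat \<Rightarrow> bool" where
  "inDom m D R e \<longleftrightarrow> set (tdec m e) \<subseteq> D \<and>
     (\<exists>c\<in>D. \<exists>d\<in>D. c < hd (tdec m e) \<and> d < hd (tdec m e) \<and>
        (\<forall>x\<in>set (tl (tdec m e)). (c = x \<or> (c, x) \<in> R) \<and> (x = d \<or> (x, d) \<in> R)))"

definition Tstr :: "nat \<Rightarrow> struc \<Rightarrow> struc" where
  "Tstr m A = ({e. inDom m (fst A) (snd A) e},
     {(e, e'). inDom m (fst A) (snd A) e \<and> inDom m (fst A) (snd A) e' \<and> lexl (snd A) (tdec m e) (tdec m e')})"

lemma inDom_conv1: "inDom m D (R\<inverse>) e \<Longrightarrow> inDom m D R e"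
proof -
  assume "inDom m D (R\<inverse>) e"
  then obtain c d where cd: "set (tdec m e) \<subseteq> D" "c \<in> D" "d \<in> D" "c < hd (tdec m e)" "d < hd (tdec m e)"
    "\<forall>x\<in>set (tl (tdec m e)). (c = x \<or> (c, x) \<in> R\<inverse>) \<and> (x = d \<or> (x, d) \<in> R\<inverse>)"
    unfolding inDom_def by blast
  then have "\<forall>x\<in>set (tl (tdec m e)). (d = x \<or> (d, x) \<in> R) \<and> (x = c \<or> (x, c) \<in> R)" by auto
  with cd show "inDom m D R e" unfolding inDom_def by blast
qed

lemma inDom_conv: "inDom m D (R\<inverse>) e = inDom m D R e"
  using inDom_conv1[of m D R e] inDom_conv1[of m D "R\<inverse>" e] by auto

lemma lexl_conv: "lexl (R\<inverse>) xs ys = lexl R ys xs"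
proof (induction xs arbitrary: ys)
  case Nil then show ?case by (cases ys) auto
next
  case (Cons x xs) then show ?case by (cases ys) auto
qed

lemma Tstr_rev: "Tstr m (rev_order A) = rev_order (Tstr m A)"
  unfolding Tstr_def rev_order_def by (auto simp: inDom_conv lexl_conv)

lemma rev_rev: "rev_order (rev_order A) = A"
  unfolding rev_order_def by simp

lemma iso_rev: "iso A B \<Longrightarrow> iso (rev_order A) (rev_order B)"
  unfolding iso_def rev_order_def by auto


fun denc :: "nat \<Rightarrow> nat \<Rightarrow> nat list list \<Rightarrow> nat list" where
  "denc b q [] = [q]"
| "denc b q (pq # rest) = (q * b + pq ! 0) # denc b (pq ! 1) rest"

fun cenc :: "nat \<Rightarrow> nat list list \<Rightarrow> nat list" where
  "cenc b [] = [0]"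
| "cenc b (pq # rest) = pq ! 0 # denc b (pq ! 1) rest"

lemma length_denc[simp]: "length (denc b q L) = Suc (length L)"
  by (induction L arbitrary: q) auto
lemma length_cenc[simp]: "length (cenc b L) = Suc (length L)"
  by (cases L) auto

definition "Q2 = {(u, v). length u = 2 \<and> length v = 2 \<and> (u!0 < v!0 \<or> (u!0 = v!0 \<and> u!1 < v!1))}"

lemma denc_mono:
  assumes "\<forall>pq\<in>set L. pq!0 < b" "\<forall>pq\<in>set L'. pq!0 < b" "length L = length L'"
    "q < q' \<or> (q = q' \<and> lexl Q2 L L')"
  shows "lexl lessr (denc b q L) (denc b q' L')"
  using assms
proof (induction L arbitrary: L' q q')
  case Nil then show ?case by (auto simp: lessr_def)
next
  case (Cons pq rest)
  obtain pq' rest' where L': "L' = pq' # rest'" using Cons.prems(3) by (cases L') auto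
  have p: "pq!0 < b" "pq'!0 < b" using Cons.prems L' by auto
  show ?case
  proof (cases "q < q'")
    case True
    have "q * b + pq!0 < q' * b + pq'!0"
    proof -
      have "q * b + pq!0 < q * b + b" using p by simp
      also have "\<dots> = Suc q * b" by simp
      also have "\<dots> \<le> q' * b" using True by (intro mult_le_mono1) simp
      finally show ?thesis by simp
    qed
    then show ?thesis using L' by (simp add: lessr_def)
  next
    case False
    then have qq: "q = q'" and lx: "lexl Q2 (pq # rest) (pq' # rest')" using Cons.prems(4) L' by auto
    from lx have "(pq, pq') \<in> Q2 \<or> (pq = pq' \<and> lexl Q2 rest rest')" by simp
    then show ?thesis
    proof
      assume "(pq, pq') \<in> Q2"
      then have "pq!0 < pq'!0 \<or> (pq!0 = pq'!0 \<and> pq!1 < pq'!1)" unfolding Q2_def by auto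
      then show ?thesis
      proof
        assume "pq!0 < pq'!0" then show ?thesis using qq L' by (simp add: lessr_def)
      next
        assume a: "pq!0 = pq'!0 \<and> pq!1 < pq'!1"
        have "lexl lessr (denc b (pq!1) rest) (denc b (pq'!1) rest')"
          using Cons.IH[of rest' "pq!1" "pq'!1"] Cons.prems L' a by auto
        then show ?thesis using qq a L' by simp
      qed
    next
      assume a: "pq = pq' \<and> lexl Q2 rest rest'"
      have "lexl lessr (denc b (pq!1) rest) (denc b (pq'!1) rest')"
        using Cons.IH[of rest' "pq!1" "pq'!1"] Cons.prems L' a by auto
      then show ?thesis using qq a L' by simp
    qed
  qed
qed

lemma cenc_mono:
  assumes "\<forall>pq\<in>set L. pq!0 < b" "\<forall>pq\<in>set L'. pq!0 < b" "length L = length L'" "lexl Q2 L L'"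
  shows "lexl lessr (cenc b L) (cenc b L')"
proof -
  obtain pq rest where L: "L = pq # rest" using assms(4) by (cases L) auto
  obtain pq' rest' where L': "L' = pq' # rest'" using assms(4) L by (cases L') auto
  from assms(4) have "(pq, pq') \<in> Q2 \<or> (pq = pq' \<and> lexl Q2 rest rest')" using L L' by simp
  then show ?thesis
  proof
    assume "(pq, pq') \<in> Q2"
    then have "pq!0 < pq'!0 \<or> (pq!0 = pq'!0 \<and> pq!1 < pq'!1)" unfolding Q2_def by auto
    then show ?thesis
    proof
      assume "pq!0 < pq'!0" then show ?thesis using L L' by (simp add: lessr_def)
    next
      assume a: "pq!0 = pq'!0 \<and> pq!1 < pq'!1"
      have "lexl lessr (denc b (pq!1) rest) (denc b (pq'!1) rest')"
        using denc_mono[of rest b rest' "pq!1" "pq'!1"] assms L L' a by auto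
      then show ?thesis using a L L' by simp
    qed
  next
    assume a: "pq = pq' \<and> lexl Q2 rest rest'"
    have "lexl lessr (denc b (pq!1) rest) (denc b (pq'!1) rest')"
      using denc_mono[of rest b rest' "pq!1" "pq'!1"] assms L L' a by auto
    then show ?thesis using a L L' by simp
  qed
qed

lemma hd_cenc_bound: "\<forall>pq\<in>set L. pq!0 < b \<Longrightarrow> 0 < b \<Longrightarrow> hd (cenc b L) < b"
  by (cases L) auto

lemma lexl_map:
  assumes "\<And>x y. x \<in> A \<Longrightarrow> y \<in> A \<Longrightarrow> (x, y) \<in> R \<Longrightarrow> (h x, h y) \<in> R'"
  shows "set xs \<subseteq> A \<Longrightarrow> set ys \<subseteq> A \<Longrightarrow> lexl R xs ys \<Longrightarrow> lexl R' (map h xs) (map h ys)"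
proof (induction xs arbitrary: ys)
  case Nil then show ?case by simp
next
  case (Cons x xs)
  then obtain y ys' where "ys = y # ys'" by (cases ys) auto
  with Cons assms show ?case by auto
qed

lemma lexl_shift: "lexl lessr (a # xs) (b # ys) \<Longrightarrow> lexl lessr ((s + a) # xs) ((s + b) # ys)"
  by (auto simp: lessr_def)


locale omsetup =
  fixes D :: "nat set" and R :: "(nat \<times> nat) set" and f :: "nat \<Rightarrow> nat list" and m :: nat
  assumes bij: "bij_betw f D {xs. length xs = 2}"
    and fR: "\<And>x y. x \<in> D \<Longrightarrow> y \<in> D \<Longrightarrow> (x, y) \<in> R \<longleftrightarrow> (f x, f y) \<in> omega_pow_rel 2"
begin

definition "pi x = f x ! 0"
definition "si x = f x ! 1"
definition "g i j = inv_into D f [i, j]"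

lemma f_len: "x \<in> D \<Longrightarrow> length (f x) = 2"
  using bij unfolding bij_betw_def by auto

lemma f_form: "x \<in> D \<Longrightarrow> f x = [pi x, si x]"
proof -
  assume x: "x \<in> D"
  then obtain a b where "f x = [a, b]" using f_len[OF x]
    by (metis (no_types, lifting) One_nat_def Suc_1 length_0_conv length_Suc_conv)
  then show ?thesis by (simp add: pi_def si_def)
qed

lemma R_iff: "x \<in> D \<Longrightarrow> y \<in> D \<Longrightarrow> (x, y) \<in> R \<longleftrightarrow> pi x < pi y \<or> (pi x = pi y \<and> si x < si y)"
  using fR[of x y] f_form[of x] f_form[of y] by (simp add: opr_lexl lessr_def)

lemma g_in: "g i j \<in> D"
proof -
  have "[i, j] \<in> f ` D" using bij unfolding bij_betw_def by auto
  then show ?thesis unfolding g_def by (rule inv_into_into)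
qed

lemma f_g: "f (g i j) = [i, j]"
proof -
  have "[i, j] \<in> f ` D" using bij unfolding bij_betw_def by auto
  then show ?thesis unfolding g_def by (rule f_inv_into_f)
qed

lemma pi_g[simp]: "pi (g i j) = i" and si_g[simp]: "si (g i j) = j"
  using f_g[of i j] by (auto simp: pi_def si_def)

lemma g_pi: "x \<in> D \<Longrightarrow> g (pi x) (si x) = x"
proof -
  assume x: "x \<in> D"
  have "inj_on f D" using bij unfolding bij_betw_def by auto
  then have "inv_into D f (f x) = x" using x by (rule inv_into_f_f)
  then show ?thesis using f_form[OF x] unfolding g_def by simp
qed

lemma g_R: "(g i j, g i' j') \<in> R \<longleftrightarrow> i < i' \<or> (i = i' \<and> j < j')"
  using R_iff[OF g_in g_in] by simp

lemma slinDR: "slin D R"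
proof (rule slin_pull[OF slin_omega[of 2], where h = f])
  show "inj_on f D" using bij unfolding bij_betw_def by auto
  show "\<And>x. x \<in> D \<Longrightarrow> f x \<in> fst (omega_pow 2)" using f_len by (simp add: omega_pow_def)
  show "\<And>x y. x \<in> D \<Longrightarrow> y \<in> D \<Longrightarrow> (x, y) \<in> R \<longleftrightarrow> (f x, f y) \<in> snd (omega_pow 2)"
    using fR by (simp add: omega_pow_def)
qed

definition "Bd y = Suc (Max (pi ` {z\<in>D. z < y}))"
definition "S i j = (\<Sum>j'<j. Bd (g i j'))"
definition "E1 e = (let t = tdec m e; y = hd t; c = cenc (Bd y) (map f (tl t))
   in pi y # (S (pi y) (si y) + hd c) # tl c)"

definition "K = max (g 0 0) (g 1 0)"
definition "J = Max (si ` {z\<in>D. z \<le> K})"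
definition "E2 L = tenc (g (L!0) (J + 1 + L!1) # map (g 0) (drop 2 L))"

definition "TA = {e. inDom m D R e}"
definition "TR = {(e, e'). inDom m D R e \<and> inDom m D R e' \<and> lexl R (tdec m e) (tdec m e')}"

lemma tdec_split: "tdec m e = hd (tdec m e) # tl (tdec m e)"
  by (metis length_tdec list.collapse list.size(3) nat.distinct(1))

lemma bound_tl:
  assumes "inDom m D R e" "x \<in> set (tl (tdec m e))"
  shows "pi x < Bd (hd (tdec m e))"
proof -
  let ?y = "hd (tdec m e)"
  obtain c d where d: "d \<in> D" "d < ?y" and xd: "x = d \<or> (x, d) \<in> R"
    using assms unfolding inDom_def by blast
  have xD: "x \<in> D" using assms tdec_split[of e] unfolding inDom_def
    by (metis list.set_sel(2) list.sel(2) list.sel(3) set_ConsD subsetD tl_Nil)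
  have "pi x \<le> pi d" using xd R_iff[OF xD d(1)] by auto
  moreover have "pi d \<le> Max (pi ` {z\<in>D. z < ?y})"
    by (rule Max_ge) (use d in auto)
  ultimately show ?thesis unfolding Bd_def by simp
qed

lemma S_mono: "j \<le> j' \<Longrightarrow> S i j \<le> S i j'"
  unfolding S_def by (rule sum_mono2) auto

lemma S_Suc: "S i (Suc j) = S i j + Bd (g i j)"
  unfolding S_def by simp

lemma E1_len: "length (E1 e) = m + 2"
  unfolding E1_def Let_def by simp

lemma E1_mono:
  assumes e: "inDom m D R e" and e': "inDom m D R e'" and lx: "lexl R (tdec m e) (tdec m e')"
  shows "lexl lessr (E1 e) (E1 e')"
proof -
  define y where "y = hd (tdec m e)"
  define xs where "xs = tl (tdec m e)"
  define y' where "y' = hd (tdec m e')"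
  define xs' where "xs' = tl (tdec m e')"
  have t: "tdec m e = y # xs" "tdec m e' = y' # xs'"
    using tdec_split[of e] tdec_split[of e'] unfolding y_def xs_def y'_def xs'_def by auto
  have yD: "y \<in> D" "set xs \<subseteq> D" using e t unfolding inDom_def by auto
  have yD': "y' \<in> D" "set xs' \<subseteq> D" using e' t unfolding inDom_def by auto
  define c where "c = cenc (Bd y) (map f xs)"
  define c' where "c' = cenc (Bd y') (map f xs')"
  have E: "E1 e = pi y # (S (pi y) (si y) + hd c) # tl c" "E1 e' = pi y' # (S (pi y') (si y') + hd c') # tl c'"
    unfolding E1_def Let_def c_def c'_def t by simp_all
  have bnd: "\<forall>pq\<in>set (map f xs). pq!0 < Bd y"
    using bound_tl[OF e] yD unfolding xs_def y_def by (auto simp: pi_def)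
  have bnd': "\<forall>pq\<in>set (map f xs'). pq!0 < Bd y'"
    using bound_tl[OF e'] yD' unfolding xs'_def y'_def by (auto simp: pi_def)
  have hc: "hd c < Bd y" unfolding c_def by (rule hd_cenc_bound[OF bnd]) (simp add: Bd_def)
  from lx t have "(y, y') \<in> R \<or> (y = y' \<and> lexl R xs xs')" by simp
  then show ?thesis
  proof
    assume "(y, y') \<in> R"
    then have "pi y < pi y' \<or> (pi y = pi y' \<and> si y < si y')" using R_iff yD yD' by auto
    then show ?thesis
    proof
      assume "pi y < pi y'" then show ?thesis using E by (simp add: lessr_def)
    next
      assume a: "pi y = pi y' \<and> si y < si y'"
      have "S (pi y) (si y) + hd c < S (pi y) (si y) + Bd y" using hc by simp
      also have "\<dots> = S (pi y) (Suc (si y))" using S_Suc g_pi[OF yD(1)] by simp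
      also have "\<dots> \<le> S (pi y) (si y')" using a by (intro S_mono) simp
      finally show ?thesis using E a by (simp add: lessr_def)
    qed
  next
    assume a: "y = y' \<and> lexl R xs xs'"
    have "lexl Q2 (map f xs) (map f xs')"
    proof (rule lexl_map[where A = D])
      fix x z assume "x \<in> D" "z \<in> D" "(x, z) \<in> R"
      then show "(f x, f z) \<in> Q2" using R_iff f_form unfolding Q2_def by auto
    qed (use a yD yD' in auto)
    moreover have "length xs = length xs'" using t length_tdec[of m e] length_tdec[of m e'] by simp
    ultimately have "lexl lessr c c'" unfolding c_def c'_def using cenc_mono bnd bnd' a by auto
    moreover have "c = hd c # tl c" "c' = hd c' # tl c'" unfolding c_def c'_def
      by (metis length_cenc list.collapse list.size(3) nat.distinct(1))+
    ultimately have "lexl lessr (hd c # tl c) (hd c' # tl c')" by simp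
    then have "lexl lessr ((S (pi y) (si y) + hd c) # tl c) ((S (pi y) (si y) + hd c') # tl c')"
      by (rule lexl_shift)
    then show ?thesis using E a by simp
  qed
qed

lemma J_prop: "z \<in> D \<Longrightarrow> z \<le> K \<Longrightarrow> si z \<le> J"
  unfolding J_def by (rule Max_ge) auto

lemma E2_tdec: "length L = m + 2 \<Longrightarrow> tdec m (E2 L) = g (L!0) (J + 1 + L!1) # map (g 0) (drop 2 L)"
  unfolding E2_def by (rule tdec_tenc) simp

lemma E2_in: assumes "length L = m + 2" shows "inDom m D R (E2 L)"
proof -
  let ?y = "g (L!0) (J + 1 + L!1)"
  have t: "tdec m (E2 L) = ?y # map (g 0) (drop 2 L)" using E2_tdec[OF assms] .
  have yK: "\<not> ?y \<le> K" using J_prop[OF g_in, of "L!0" "J + 1 + L!1"] by auto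
  have c: "g 0 0 < ?y" "g 1 0 < ?y" using yK unfolding K_def by auto
  have "\<forall>x\<in>set (map (g 0) (drop 2 L)). (g 0 0 = x \<or> (g 0 0, x) \<in> R) \<and> (x = g 1 0 \<or> (x, g 1 0) \<in> R)"
  proof
    fix x assume "x \<in> set (map (g 0) (drop 2 L))"
    then obtain j where x: "x = g 0 j" by auto
    have "g 0 0 = x \<or> (g 0 0, x) \<in> R" using g_R x by (cases j) auto
    moreover have "(x, g 1 0) \<in> R" using g_R x by auto
    ultimately show "(g 0 0 = x \<or> (g 0 0, x) \<in> R) \<and> (x = g 1 0 \<or> (x, g 1 0) \<in> R)" by auto
  qed
  moreover have "set (tdec m (E2 L)) \<subseteq> D" using t g_in by auto
  ultimately show ?thesis unfolding inDom_def t
    by (intro conjI bexI[of _ "g 0 0"] bexI[of _ "g 1 0"]) (use c g_in in auto)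
qed

lemma E2_mono:
  assumes L: "length L = m + 2" and L': "length L' = m + 2" and lx: "lexl lessr L L'"
  shows "lexl R (tdec m (E2 L)) (tdec m (E2 L'))"
proof -
  obtain a b cs where Lf: "L = a # b # cs" using L by (cases L; cases "tl L") auto
  obtain a' b' cs' where Lf': "L' = a' # b' # cs'" using L' by (cases L'; cases "tl L'") auto
  have t: "tdec m (E2 L) = g a (J + 1 + b) # map (g 0) cs" using E2_tdec[OF L] Lf by simp
  have t': "tdec m (E2 L') = g a' (J + 1 + b') # map (g 0) cs'" using E2_tdec[OF L'] Lf' by simp
  from lx have "a < a' \<or> (a = a' \<and> (b < b' \<or> (b = b' \<and> lexl lessr cs cs')))"
    unfolding Lf Lf' by (auto simp: lessr_def)
  then show ?thesis
  proof (elim disjE conjE)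
    assume "a < a'" then show ?thesis unfolding t t' using g_R by simp
  next
    assume "a = a'" "b < b'" then show ?thesis unfolding t t' using g_R by simp
  next
    assume ab: "a = a'" "b = b'" "lexl lessr cs cs'"
    have "lexl R (map (g 0) cs) (map (g 0) cs')"
      by (rule lexl_map[where A = UNIV]) (use ab g_R in \<open>auto simp: lessr_def\<close>)
    then show ?thesis unfolding t t' using ab by simp
  qed
qed

lemma slinT: "slin TA TR"
proof (rule slin_pull[OF slin_lexl[OF slinDR, of "Suc m"], where h = "tdec m"])
  show "inj_on (tdec m) TA" unfolding inj_on_def using tdec_inj by blast
  show "\<And>x. x \<in> TA \<Longrightarrow> tdec m x \<in> lists_over D (Suc m)"
    unfolding TA_def lists_over_def inDom_def by auto
  show "\<And>x y. x \<in> TA \<Longrightarrow> y \<in> TA \<Longrightarrow> (x, y) \<in> TR \<longleftrightarrow> (tdec m x, tdec m y) \<in> {(xs, ys). lexl R xs ys}"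
    unfolding TA_def TR_def by auto
qed

lemma main_iso: "iso (TA, TR) (omega_pow (m + 2))"
proof -
  have "iso (TA, TR) ({xs. length xs = m + 2}, omega_pow_rel (m + 2))"
  proof (rule sb_iso[where g = E1 and h = E2])
    show "slin TA TR" by (rule slinT)
    show "slin {xs. length xs = m + 2} (omega_pow_rel (m + 2))"
      using slin_omega[of "m + 2"] by (simp add: omega_pow_def)
    show "wfon {xs. length xs = m + 2} (omega_pow_rel (m + 2))"
      using wfon_omega[of "m + 2"] by (simp add: omega_pow_def)
    show "smono TA TR {xs. length xs = m + 2} (omega_pow_rel (m + 2)) E1"
      unfolding smono_def TA_def TR_def using E1_len E1_mono by (auto simp del: omega_pow_rel.simps simp add: opr_lexl)
    show "smono {xs. length xs = m + 2} (omega_pow_rel (m + 2)) TA TR E2"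
      unfolding smono_def TA_def TR_def using E2_in E2_mono by (auto simp del: omega_pow_rel.simps simp add: opr_lexl)
  qed
  then show ?thesis by (simp add: omega_pow_def)
qed

end

theorem Tstr_omega:
  assumes "iso (D, R) (omega_pow 2)"
  shows "iso (Tstr m (D, R)) (omega_pow (m + 2))"
proof -
  obtain f where bij: "bij_betw f D {xs. length xs = 2}"
    and fR: "\<forall>x\<in>D. \<forall>y\<in>D. (x, y) \<in> R \<longleftrightarrow> (f x, f y) \<in> omega_pow_rel 2"
    using assms unfolding iso_def omega_pow_def by auto
  interpret omsetup D R f m using bij fR by unfold_locales auto
  have "Tstr m (D, R) = (TA, TR)" unfolding Tstr_def TA_def TR_def by simp
  then show ?thesis using main_iso by simp
qed


fun scode :: "sent \<Rightarrow> nat" where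
  "scode (Eq a b) = 4 * prod_encode (a, b)"
| "scode (Less a b) = 4 * prod_encode (a, b) + 1"
| "scode (NEq a b) = 4 * prod_encode (a, b) + 2"
| "scode (NLess a b) = 4 * prod_encode (a, b) + 3"

lemma div4: "t < 4 \<Longrightarrow> (4 * p + t) div 4 = (p::nat)" "t < 4 \<Longrightarrow> (4 * p + t) mod 4 = (t::nat)"
  by simp_all

lemma sent_decode_scode[simp]: "sent_decode (scode p) = p"
proof (cases p)
  case (Eq a b) then show ?thesis using div4[of 0 "prod_encode (a,b)"] by (simp add: sent_decode_def)
next
  case (Less a b) then show ?thesis using div4[of 1 "prod_encode (a,b)"] by (simp add: sent_decode_def)
next
  case (NEq a b) then show ?thesis using div4[of 2 "prod_encode (a,b)"] by (simp add: sent_decode_def)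
next
  case (NLess a b) then show ?thesis using div4[of 3 "prod_encode (a,b)"] by (simp add: sent_decode_def)
qed

lemma scode_inj: "scode p = scode q \<Longrightarrow> p = q"
  by (metis sent_decode_scode)

fun sc :: "sent \<Rightarrow> nat" where
  "sc (Eq a b) = max a b" | "sc (Less a b) = max a b" | "sc (NEq a b) = max a b" | "sc (NLess a b) = max a b"

definition domH :: "nat \<Rightarrow> (sent \<Rightarrow> bool) \<Rightarrow> nat \<Rightarrow> bool" where
  "domH m H e \<longleftrightarrow> (\<forall>i\<le>m. H (Eq (tdec m e ! i) (tdec m e ! i))) \<and>
     (\<exists>c<tdec m e ! 0. \<exists>d<tdec m e ! 0. H (Eq c c) \<and> H (Eq d d) \<and>
        (\<forall>i\<le>m. i = 0 \<or> ((c = tdec m e ! i \<or> H (Less c (tdec m e ! i))) \<and>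
                         (tdec m e ! i = d \<or> H (Less (tdec m e ! i) d)))))"

definition lexltH :: "nat \<Rightarrow> (sent \<Rightarrow> bool) \<Rightarrow> nat \<Rightarrow> nat \<Rightarrow> bool" where
  "lexltH m H a b \<longleftrightarrow> (\<exists>l\<le>m. (\<forall>i<l. tdec m a ! i = tdec m b ! i) \<and> H (Less (tdec m a ! l) (tdec m b ! l)))"

definition lexgeH :: "nat \<Rightarrow> (sent \<Rightarrow> bool) \<Rightarrow> nat \<Rightarrow> nat \<Rightarrow> bool" where
  "lexgeH m H a b \<longleftrightarrow> a = b \<or> (\<exists>l\<le>m. (\<forall>i<l. tdec m a ! i = tdec m b ! i) \<and>
      tdec m a ! l \<noteq> tdec m b ! l \<and> H (NLess (tdec m a ! l) (tdec m b ! l)))"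

fun okH :: "nat \<Rightarrow> (sent \<Rightarrow> bool) \<Rightarrow> sent \<Rightarrow> bool" where
  "okH m H (Eq a b) = (a = b \<and> domH m H a)"
| "okH m H (NEq a b) = (a \<noteq> b \<and> domH m H a \<and> domH m H b)"
| "okH m H (Less a b) = (domH m H a \<and> domH m H b \<and> lexltH m H a b)"
| "okH m H (NLess a b) = (domH m H a \<and> domH m H b \<and> lexgeH m H a b)"

lemma tdec_nth_le: "i \<le> m \<Longrightarrow> tdec m e ! i \<le> e"
  using tdec_le[of "tdec m e ! i" m e] by (simp add: less_Suc_eq_le)

lemma domH_loc: "domH m H e \<Longrightarrow> (\<And>p. H p \<Longrightarrow> sc p \<le> e \<Longrightarrow> H' p) \<Longrightarrow> domH m H' e"
proof -
  assume d: "domH m H e" and h: "\<And>p. H p \<Longrightarrow> sc p \<le> e \<Longrightarrow> H' p"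
  have le: "\<And>i. i \<le> m \<Longrightarrow> tdec m e ! i \<le> e" by (rule tdec_nth_le)
  have le0: "tdec m e ! 0 \<le> e" using le[of 0] by simp
  from d obtain c d' where cd: "c < tdec m e ! 0" "d' < tdec m e ! 0" "H (Eq c c)" "H (Eq d' d')"
    "\<forall>i\<le>m. i = 0 \<or> ((c = tdec m e ! i \<or> H (Less c (tdec m e ! i))) \<and> (tdec m e ! i = d' \<or> H (Less (tdec m e ! i) d')))"
    and a1: "\<forall>i\<le>m. H (Eq (tdec m e ! i) (tdec m e ! i))"
    unfolding domH_def by blast
  have "\<forall>i\<le>m. H' (Eq (tdec m e ! i) (tdec m e ! i))" using a1 h le by auto
  moreover have "H' (Eq c c)" "H' (Eq d' d')" using cd le0 h by auto
  moreover have "\<forall>i\<le>m. i = 0 \<or> ((c = tdec m e ! i \<or> H' (Less c (tdec m e ! i))) \<and> (tdec m e ! i = d' \<or> H' (Less (tdec m e ! i) d')))"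
  proof (intro allI impI)
    fix i assume i: "i \<le> m"
    have "c \<le> e" "d' \<le> e" using cd le0 by auto
    then show "i = 0 \<or> ((c = tdec m e ! i \<or> H' (Less c (tdec m e ! i))) \<and> (tdec m e ! i = d' \<or> H' (Less (tdec m e ! i) d')))"
      using cd(5) i h le[OF i] by auto
  qed
  ultimately show ?thesis using cd(1,2) unfolding domH_def by blast
qed

lemma okH_loc: "okH m H p \<Longrightarrow> (\<And>q. H q \<Longrightarrow> sc q \<le> sc p \<Longrightarrow> H' q) \<Longrightarrow> okH m H' p"
proof (cases p)
  case (Eq a b)
  assume "okH m H p" "\<And>q. H q \<Longrightarrow> sc q \<le> sc p \<Longrightarrow> H' q"
  then show ?thesis using Eq domH_loc[of m H a H'] by auto
next
  case (NEq a b)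
  assume "okH m H p" "\<And>q. H q \<Longrightarrow> sc q \<le> sc p \<Longrightarrow> H' q"
  then show ?thesis using NEq domH_loc[of m H a H'] domH_loc[of m H b H'] by auto
next
  case (Less a b)
  assume o: "okH m H p" and h: "\<And>q. H q \<Longrightarrow> sc q \<le> sc p \<Longrightarrow> H' q"
  from o Less obtain l where l: "l \<le> m" "\<forall>i<l. tdec m a ! i = tdec m b ! i"
    "H (Less (tdec m a ! l) (tdec m b ! l))" unfolding lexltH_def by (auto simp del: okH.simps) (auto simp: lexltH_def)
  have "sc (Less (tdec m a ! l) (tdec m b ! l)) \<le> sc p"
    using Less tdec_nth_le[OF l(1), of a] tdec_nth_le[OF l(1), of b] by auto
  then have "lexltH m H' a b" using l h unfolding lexltH_def by blast
  then show ?thesis using o Less h domH_loc[of m H a H'] domH_loc[of m H b H'] by auto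
next
  case (NLess a b)
  assume o: "okH m H p" and h: "\<And>q. H q \<Longrightarrow> sc q \<le> sc p \<Longrightarrow> H' q"
  have "lexgeH m H' a b"
  proof (cases "a = b")
    case True then show ?thesis unfolding lexgeH_def by simp
  next
    case False
    from o NLess False have "lexgeH m H a b" by simp
    with False obtain l where l: "l \<le> m" "\<forall>i<l. tdec m a ! i = tdec m b ! i"
      "tdec m a ! l \<noteq> tdec m b ! l" "H (NLess (tdec m a ! l) (tdec m b ! l))" by (auto simp: lexgeH_def)
    have "sc (NLess (tdec m a ! l) (tdec m b ! l)) \<le> sc p"
      using NLess tdec_nth_le[OF l(1), of a] tdec_nth_le[OF l(1), of b] by auto
    then show ?thesis using l h unfolding lexgeH_def by blast
  qed
  then show ?thesis using o NLess h domH_loc[of m H a H'] domH_loc[of m H b H'] by auto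
qed


lemma diag_simps[simp]:
  "Eq a b \<in> diag (D, R) \<longleftrightarrow> a = b \<and> a \<in> D"
  "NEq a b \<in> diag (D, R) \<longleftrightarrow> a \<in> D \<and> b \<in> D \<and> a \<noteq> b"
  "Less a b \<in> diag (D, R) \<longleftrightarrow> a \<in> D \<and> b \<in> D \<and> (a, b) \<in> R"
  "NLess a b \<in> diag (D, R) \<longleftrightarrow> a \<in> D \<and> b \<in> D \<and> (a, b) \<notin> R"
  by (auto simp: diag_def)

lemma lexl_nth: "length xs = length ys \<Longrightarrow>
   lexl R xs ys \<longleftrightarrow> (\<exists>l<length xs. (\<forall>i<l. xs!i = ys!i) \<and> (xs!l, ys!l) \<in> R)"
proof (induction xs arbitrary: ys)
  case Nil then show ?case by simp
next
  case (Cons x xs)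
  then obtain y ys' where ys: "ys = y # ys'" by (cases ys) auto
  have IH: "lexl R xs ys' \<longleftrightarrow> (\<exists>l<length xs. (\<forall>i<l. xs!i = ys'!i) \<and> (xs!l, ys'!l) \<in> R)"
    using Cons ys by simp
  show ?case
  proof
    assume "lexl R (x # xs) ys"
    then have "(x, y) \<in> R \<or> (x = y \<and> lexl R xs ys')" using ys by simp
    then show "\<exists>l<length (x # xs). (\<forall>i<l. (x # xs)!i = ys!i) \<and> ((x # xs)!l, ys!l) \<in> R"
    proof
      assume "(x, y) \<in> R" then show ?thesis using ys by (intro exI[of _ 0]) auto
    next
      assume a: "x = y \<and> lexl R xs ys'"
      then obtain l where l: "l < length xs" "\<forall>i<l. xs!i = ys'!i" "(xs!l, ys'!l) \<in> R" using IH by blast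
      have "\<forall>i<Suc l. (x # xs)!i = ys!i"
      proof (intro allI impI)
        fix i assume "i < Suc l" then show "(x # xs)!i = ys!i" using a l ys by (cases i) auto
      qed
      then show ?thesis using l ys by (intro exI[of _ "Suc l"]) auto
    qed
  next
    assume "\<exists>l<length (x # xs). (\<forall>i<l. (x # xs)!i = ys!i) \<and> ((x # xs)!l, ys!l) \<in> R"
    then obtain l where l: "l < length (x # xs)" "\<forall>i<l. (x # xs)!i = ys!i" "((x # xs)!l, ys!l) \<in> R" by blast
    show "lexl R (x # xs) ys"
    proof (cases l)
      case 0 then show ?thesis using l ys by simp
    next
      case (Suc l')
      have "x = y" using l(2) Suc ys by auto
      moreover have "\<forall>i<l'. xs!i = ys'!i" using l(2) Suc ys by auto
      moreover have "(xs!l', ys'!l') \<in> R" "l' < length xs" using l Suc ys by auto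
      ultimately show ?thesis using IH ys by auto
    qed
  qed
qed

lemma set_tl_nth: "length t = Suc m \<Longrightarrow> x \<in> set (tl t) \<longleftrightarrow> (\<exists>i. 0 < i \<and> i \<le> m \<and> x = t!i)"
proof -
  assume len: "length t = Suc m"
  then obtain h r where t: "t = h # r" by (cases t) auto
  have "x \<in> set r \<longleftrightarrow> (\<exists>j<m. x = r!j)" using len t by (auto simp: in_set_conv_nth)
  also have "\<dots> \<longleftrightarrow> (\<exists>i. 0 < i \<and> i \<le> m \<and> x = t!i)"
  proof
    assume "\<exists>j<m. x = r!j" then obtain j where "j < m" "x = r!j" by blast
    then show "\<exists>i. 0 < i \<and> i \<le> m \<and> x = t!i" using t by (intro exI[of _ "Suc j"]) auto
  next
    assume "\<exists>i. 0 < i \<and> i \<le> m \<and> x = t!i"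
    then obtain i where "0 < i" "i \<le> m" "x = t!i" by blast
    then show "\<exists>j<m. x = r!j" using t by (intro exI[of _ "i - 1"]) (cases i, auto)
  qed
  finally show ?thesis using t by simp
qed

lemma set_nth_le: "length t = Suc m \<Longrightarrow> set t \<subseteq> D \<longleftrightarrow> (\<forall>i\<le>m. t!i \<in> D)"
  by (auto simp: in_set_conv_nth less_Suc_eq_le subset_iff)

lemma hd_nth0: "length t = Suc m \<Longrightarrow> hd t = t!0"
  by (cases t) auto

lemma domH_diag: "domH m (\<lambda>p. p \<in> diag (D, R)) e \<longleftrightarrow> inDom m D R e"
proof -
  let ?t = "tdec m e"
  have len: "length ?t = Suc m" by simp
  show ?thesis
  proof
    assume d: "domH m (\<lambda>p. p \<in> diag (D, R)) e"
    have inD: "\<forall>i\<le>m. ?t!i \<in> D" using d unfolding domH_def by simp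
    obtain c d' where cd: "c < ?t!0" "d' < ?t!0" "Eq c c \<in> diag (D, R)" "Eq d' d' \<in> diag (D, R)"
      and ci: "\<forall>i\<le>m. i = 0 \<or> ((c = ?t!i \<or> Less c (?t!i) \<in> diag (D, R)) \<and> (?t!i = d' \<or> Less (?t!i) d' \<in> diag (D, R)))"
      using d unfolding domH_def by blast
    have cD: "c \<in> D" "d' \<in> D" using cd(3,4) by auto
    have "\<forall>x\<in>set (tl ?t). (c = x \<or> (c, x) \<in> R) \<and> (x = d' \<or> (x, d') \<in> R)"
    proof
      fix x assume "x \<in> set (tl ?t)"
      then obtain i where i: "0 < i" "i \<le> m" "x = ?t!i" using set_tl_nth[OF len] by blast
      then have "(c = x \<or> Less c x \<in> diag (D, R)) \<and> (x = d' \<or> Less x d' \<in> diag (D, R))"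
        using ci by auto
      then show "(c = x \<or> (c, x) \<in> R) \<and> (x = d' \<or> (x, d') \<in> R)" by auto
    qed
    moreover have "set ?t \<subseteq> D" using set_nth_le[OF len] inD by simp
    ultimately show "inDom m D R e" unfolding inDom_def hd_nth0[OF len]
      using cd(1,2) cD by blast
  next
    assume i: "inDom m D R e"
    then have inD: "\<forall>i\<le>m. ?t!i \<in> D" unfolding inDom_def using set_nth_le[OF len] by simp
    obtain c d' where cd: "c \<in> D" "d' \<in> D" "c < ?t!0" "d' < ?t!0"
      and cx: "\<forall>x\<in>set (tl ?t). (c = x \<or> (c, x) \<in> R) \<and> (x = d' \<or> (x, d') \<in> R)"
      using i unfolding inDom_def hd_nth0[OF len] by blast
    have "\<forall>i\<le>m. i = 0 \<or> ((c = ?t!i \<or> Less c (?t!i) \<in> diag (D, R)) \<and> (?t!i = d' \<or> Less (?t!i) d' \<in> diag (D, R)))"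
    proof (intro allI impI)
      fix i assume im: "i \<le> m"
      show "i = 0 \<or> ((c = ?t!i \<or> Less c (?t!i) \<in> diag (D, R)) \<and> (?t!i = d' \<or> Less (?t!i) d' \<in> diag (D, R)))"
      proof (cases "i = 0")
        case False
        then have "?t!i \<in> set (tl ?t)" using set_tl_nth[OF len] im by blast
        then have "(c = ?t!i \<or> (c, ?t!i) \<in> R) \<and> (?t!i = d' \<or> (?t!i, d') \<in> R)" using cx by blast
        then show ?thesis using inD im cd by auto
      qed simp
    qed
    moreover have "Eq c c \<in> diag (D, R)" "Eq d' d' \<in> diag (D, R)" using cd by auto
    moreover have "\<forall>i\<le>m. Eq (?t!i) (?t!i) \<in> diag (D, R)" using inD by simp
    ultimately show "domH m (\<lambda>p. p \<in> diag (D, R)) e" unfolding domH_def using cd(3,4) by blast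
  qed
qed

lemma inDom_nth: "inDom m D R e \<Longrightarrow> i \<le> m \<Longrightarrow> tdec m e ! i \<in> D"
  unfolding inDom_def using set_nth_le[of "tdec m e" m D] by auto

lemma lexltH_diag: "inDom m D R a \<Longrightarrow> inDom m D R b \<Longrightarrow>
   lexltH m (\<lambda>p. p \<in> diag (D, R)) a b \<longleftrightarrow> lexl R (tdec m a) (tdec m b)"
  unfolding lexltH_def lexl_nth[of "tdec m a" "tdec m b", simplified]
  using inDom_nth less_Suc_eq_le by auto

lemma first_diff:
  assumes "length xs = length ys" "xs \<noteq> ys"
  obtains l where "l < length xs" "xs!l \<noteq> ys!l" "\<forall>i<l. xs!i = ys!i"
proof -
  have "\<exists>i. i < length xs \<and> xs!i \<noteq> ys!i" using assms nth_equalityI by blast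
  then obtain l where "l < length xs \<and> xs!l \<noteq> ys!l" "\<forall>i<l. \<not>(i < length xs \<and> xs!i \<noteq> ys!i)"
    using exists_least_iff[of "\<lambda>i. i < length xs \<and> xs!i \<noteq> ys!i"] by blast
  then show ?thesis using that by auto
qed

lemma lexgeH_diag:
  assumes sl: "slin D R" and a: "inDom m D R a" and b: "inDom m D R b"
  shows "lexgeH m (\<lambda>p. p \<in> diag (D, R)) a b \<longleftrightarrow> \<not> lexl R (tdec m a) (tdec m b)"
proof -
  let ?ta = "tdec m a" and ?tb = "tdec m b"
  have nD: "\<And>i. i \<le> m \<Longrightarrow> ?ta!i \<in> D \<and> ?tb!i \<in> D" using inDom_nth a b by blast
  have lx: "lexl R ?ta ?tb \<longleftrightarrow> (\<exists>l\<le>m. (\<forall>i<l. ?ta!i = ?tb!i) \<and> (?ta!l, ?tb!l) \<in> R)"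
    using lexl_nth[of ?ta ?tb R] less_Suc_eq_le by simp
  show ?thesis
  proof
    assume g: "lexgeH m (\<lambda>p. p \<in> diag (D, R)) a b"
    show "\<not> lexl R ?ta ?tb"
    proof
      assume "lexl R ?ta ?tb"
      then obtain l' where l': "l' \<le> m" "\<forall>i<l'. ?ta!i = ?tb!i" "(?ta!l', ?tb!l') \<in> R" using lx by blast
      show False
      proof (cases "a = b")
        case True then show False using l' slin_irr[OF sl] nD by auto
      next
        case False
        with g obtain l where l: "l \<le> m" "\<forall>i<l. ?ta!i = ?tb!i" "?ta!l \<noteq> ?tb!l" "(?ta!l, ?tb!l) \<notin> R"
          unfolding lexgeH_def by auto
        consider "l' < l" | "l' = l" | "l < l'" by linarith
        then show False
        proof cases
          case 1 then show False using l l' slin_irr[OF sl] nD by auto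
        next
          case 2 then show False using l l' by auto
        next
          case 3 then show False using l l' by auto
        qed
      qed
    qed
  next
    assume n: "\<not> lexl R ?ta ?tb"
    show "lexgeH m (\<lambda>p. p \<in> diag (D, R)) a b"
    proof (cases "a = b")
      case True then show ?thesis unfolding lexgeH_def by simp
    next
      case False
      then have "?ta \<noteq> ?tb" using tdec_inj by blast
      then obtain l where l: "l < length ?ta" "?ta!l \<noteq> ?tb!l" "\<forall>i<l. ?ta!i = ?tb!i"
        using first_diff[of ?ta ?tb] by auto
      have lm: "l \<le> m" using l by simp
      have "(?ta!l, ?tb!l) \<notin> R" using n lx lm l by blast
      then show ?thesis unfolding lexgeH_def using lm l nD[OF lm] by auto
    qed
  qed
qed

lemma okH_diag:
  assumes "slin D R"
  shows "okH m (\<lambda>p. p \<in> diag (D, R)) q \<longleftrightarrow> q \<in> diag (Tstr m (D, R))"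
proof -
  have T: "Tstr m (D, R) = ({e. inDom m D R e}, {(e, e'). inDom m D R e \<and> inDom m D R e' \<and> lexl R (tdec m e) (tdec m e')})"
    unfolding Tstr_def by simp
  show ?thesis
  proof (cases q)
    case (Eq a b) then show ?thesis unfolding T by (auto simp: domH_diag)
  next
    case (NEq a b) then show ?thesis unfolding T by (auto simp: domH_diag)
  next
    case (Less a b) then show ?thesis unfolding T by (auto simp: domH_diag lexltH_diag)
  next
    case (NLess a b) then show ?thesis unfolding T using lexgeH_diag[OF assms] by (auto simp: domH_diag)
  qed
qed


definition "Wset m = {w. okH m (\<lambda>p. scode p \<in> set_decode (fst (prod_decode w))) (sent_decode (snd (prod_decode w)))}"
definition "Gam m = {(sent_decode ` set_decode (fst (prod_decode w)), sent_decode (snd (prod_decode w))) | w. w \<in> Wset m}"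

lemma finite_Bnd: "finite {p. sc p \<le> N}"
proof -
  have "{p. sc p \<le> N} \<subseteq> (\<lambda>(a, b). Eq a b) ` ({..N} \<times> {..N}) \<union> (\<lambda>(a, b). Less a b) ` ({..N} \<times> {..N})
      \<union> (\<lambda>(a, b). NEq a b) ` ({..N} \<times> {..N}) \<union> (\<lambda>(a, b). NLess a b) ` ({..N} \<times> {..N})"
  proof
    fix p assume "p \<in> {p. sc p \<le> N}"
    then show "p \<in> (\<lambda>(a, b). Eq a b) ` ({..N} \<times> {..N}) \<union> (\<lambda>(a, b). Less a b) ` ({..N} \<times> {..N})
      \<union> (\<lambda>(a, b). NEq a b) ` ({..N} \<times> {..N}) \<union> (\<lambda>(a, b). NLess a b) ` ({..N} \<times> {..N})"
      by (cases p) force+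
  qed
  then show ?thesis by (rule finite_subset) auto
qed

lemma apply_Gam: "apply_op (Gam m) X = {q. okH m (\<lambda>p. p \<in> X) q}"
proof (intro set_eqI iffI)
  fix q assume "q \<in> apply_op (Gam m) X"
  then obtain w where w: "w \<in> Wset m" and q: "q = sent_decode (snd (prod_decode w))"
    and sub: "sent_decode ` set_decode (fst (prod_decode w)) \<subseteq> X"
    unfolding apply_op_def Gam_def by blast
  have o: "okH m (\<lambda>p. scode p \<in> set_decode (fst (prod_decode w))) q" using w q unfolding Wset_def by simp
  have "okH m (\<lambda>p. p \<in> X) q"
  proof (rule okH_loc[OF o])
    fix p assume "scode p \<in> set_decode (fst (prod_decode w))"
    then have "sent_decode (scode p) \<in> X" using sub by blast
    then show "p \<in> X" by simp
  qed
  then show "q \<in> {q. okH m (\<lambda>p. p \<in> X) q}" by simp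
next
  fix q assume "q \<in> {q. okH m (\<lambda>p. p \<in> X) q}"
  then have o: "okH m (\<lambda>p. p \<in> X) q" by simp
  define \<alpha> where "\<alpha> = X \<inter> {p. sc p \<le> sc q}"
  have fin: "finite \<alpha>" unfolding \<alpha>_def using finite_Bnd by auto
  define u where "u = set_encode (scode ` \<alpha>)"
  have su: "set_decode u = scode ` \<alpha>" unfolding u_def using fin by simp
  define w where "w = prod_encode (u, scode q)"
  have "okH m (\<lambda>p. scode p \<in> set_decode u) q"
  proof (rule okH_loc[OF o])
    fix p assume "p \<in> X" "sc p \<le> sc q"
    then show "scode p \<in> set_decode u" unfolding su \<alpha>_def by auto
  qed
  then have wW: "w \<in> Wset m" unfolding Wset_def w_def by simp
  have "sent_decode ` set_decode u = \<alpha>" unfolding su image_image by simp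
  then have "(\<alpha>, q) \<in> Gam m" using wW unfolding Gam_def w_def by force
  moreover have "\<alpha> \<subseteq> X" unfolding \<alpha>_def by auto
  ultimately show "q \<in> apply_op (Gam m) X" unfolding apply_op_def by blast
qed


datatype aexp = V nat | Z | S aexp | Rec aexp aexp aexp | Call aexp "aexp list"

fun ev :: "aexp \<Rightarrow> nat list \<Rightarrow> nat" where
  "ev (V j) xs = xs ! j"
| "ev Z xs = 0"
| "ev (S a) xs = Suc (ev a xs)"
| "ev (Rec n b s) xs = rec_nat (ev b xs) (\<lambda>i r. ev s (r # i # xs)) (ev n xs)"
| "ev (Call f as) xs = ev f (map (\<lambda>a. ev a xs) as)"

fun wfe :: "nat \<Rightarrow> aexp \<Rightarrow> bool" where
  "wfe k (V j) = (j < k)"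
| "wfe k Z = True"
| "wfe k (S a) = wfe k a"
| "wfe k (Rec n b s) = (wfe k n \<and> wfe k b \<and> wfe (k+2) s)"
| "wfe k (Call f as) = (wfe (length as) f \<and> (\<forall>a\<in>set as. wfe k a))"

fun cmp :: "nat \<Rightarrow> aexp \<Rightarrow> recf" where
  "cmp k (V j) = Proj j"
| "cmp k Z = Zero"
| "cmp k (S a) = Comp Succ [cmp k a]"
| "cmp k (Rec n b s) = Comp (PrimRec (cmp k b) (cmp (k+2) s)) (cmp k n # map Proj [0..<k])"
| "cmp k (Call f as) = Comp (cmp (length as) f) (map (cmp k) as)"

lemma eval_primrec_all:
  assumes "eval F xs z0" and "\<And>r i. eval G (r # i # xs) (g i r)"
  shows "eval (PrimRec F G) (v # xs) (rec_nat z0 g v)"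
proof (induction v)
  case 0 then show ?case using assms(1) by (auto intro: eval_PrimRec0)
next
  case (Suc v) then show ?case using assms(2) by (auto intro: eval_PrimRecS)
qed

lemma list_all2_proj: "list_all2 (\<lambda>g y. eval g xs y) (map Proj [0..<length xs]) xs"
  by (auto simp: list_all2_conv_all_nth intro: eval_Proj)

lemma cmp_correct: "wfe k e \<Longrightarrow> length xs = k \<Longrightarrow> eval (cmp k e) xs (ev e xs)"
proof (induction e arbitrary: k xs)
  case (V j) then show ?case by (auto intro: eval_Proj)
next
  case Z then show ?case by (auto intro: eval_Zero)
next
  case (S a)
  then have "eval (cmp k a) xs (ev a xs)" by auto
  then show ?case by (auto intro!: eval_Comp[where ys="[ev a xs]"] eval_Succ)
next
  case (Rec n b s)
  have hb: "eval (cmp k b) xs (ev b xs)" using Rec by auto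
  have hs: "\<And>r i. eval (cmp (k+2) s) (r # i # xs) (ev s (r # i # xs))" using Rec by auto
  have hn: "eval (cmp k n) xs (ev n xs)" using Rec by auto
  have "list_all2 (\<lambda>g y. eval g xs y) (cmp k n # map Proj [0..<k]) (ev n xs # xs)"
    using hn list_all2_proj[of xs] Rec.prems by auto
  moreover have "eval (PrimRec (cmp k b) (cmp (k+2) s)) (ev n xs # xs) (ev (Rec n b s) xs)"
    using eval_primrec_all[OF hb hs] by simp
  ultimately show ?case by (auto intro: eval_Comp)
next
  case (Call f as)
  have "list_all2 (\<lambda>g y. eval g xs y) (map (cmp k) as) (map (\<lambda>a. ev a xs) as)"
    using Call by (auto simp: list_all2_conv_all_nth)
  moreover have "eval (cmp (length as) f) (map (\<lambda>a. ev a xs) as) (ev f (map (\<lambda>a. ev a xs) as))"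
    using Call by auto
  ultimately show ?case by (auto intro: eval_Comp)
qed

inductive_cases ZeroE: "eval Zero xs z"
inductive_cases SuccE: "eval Succ xs z"
inductive_cases ProjE: "eval (Proj i) xs z"
inductive_cases CompE: "eval (Comp f gs) xs z"
inductive_cases PrimRecE: "eval (PrimRec f g) xs z"
inductive_cases MinimE: "eval (Minim f) xs z"

lemma eval_det: "eval f xs y \<Longrightarrow> eval f xs z \<Longrightarrow> y = z"
proof (induction arbitrary: z rule: eval.induct)
  case (eval_Zero xs) then show ?case by (blast elim: ZeroE)
next
  case (eval_Succ x xs) then show ?case by (blast elim: SuccE)
next
  case (eval_Proj i xs) then show ?case by (blast elim: ProjE)
next
  case (eval_Comp xs gs ys f z')
  from eval_Comp.prems obtain ys' where a: "list_all2 (\<lambda>g y. eval g xs y) gs ys'" and b: "eval f ys' z"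
    by (blast elim: CompE)
  have "ys = ys'" using eval_Comp.IH(1) a
  proof (induction gs arbitrary: ys ys')
    case Nil then show ?case by auto
  next
    case (Cons g gs)
    then obtain y ys0 y' ys0' where "ys = y # ys0" "ys' = y' # ys0'" by (auto simp: list_all2_Cons1)
    with Cons show ?case by auto
  qed
  with b eval_Comp.IH(2) show ?case by auto
next
  case (eval_PrimRec0 f xs z' g)
  from eval_PrimRec0.prems have "eval f xs z" by (blast elim: PrimRecE)
  with eval_PrimRec0.IH show ?case by auto
next
  case (eval_PrimRecS f g k xs r z')
  from eval_PrimRecS.prems obtain r' where "eval (PrimRec f g) (k # xs) r'" "eval g (r' # k # xs) z"
    by (blast elim: PrimRecE)
  with eval_PrimRecS.IH show ?case by auto
next
  case (eval_Minim f y xs)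
  from eval_Minim.prems have "eval f (z # xs) 0" "\<forall>u<z. \<exists>v. v \<noteq> 0 \<and> eval f (u # xs) v"
    by (blast elim: MinimE)+
  then show ?case using eval_Minim.IH
    by (metis linorder_neqE_nat)
qed


definition "addT = Rec (V 0) (V 1) (S (V 0))"
definition "add a b = Call addT [a, b]"
definition "mulT = Rec (V 0) Z (add (V 0) (V 3))"
definition "mul a b = Call mulT [a, b]"
definition "predT = Rec (V 0) Z (V 1)"
definition "subT = Rec (V 1) (V 0) (Call predT [V 0])"
definition "sub a b = Call subT [a, b]"
fun cst :: "nat \<Rightarrow> aexp" where "cst 0 = Z" | "cst (Suc n) = S (cst n)"
definition "sg a = sub a (Call predT [a])"
definition "lt a b = sg (sub b a)"
definition "eqe a b = sub (S Z) (sg (add (sub a b) (sub b a)))"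
definition "aand a b = mul a b"
definition "aor a b = sg (add a b)"
definition "anot a = sub (S Z) a"
definition "bsum k n body = Rec n Z (add (V 0) (Call body (map V [1..<k+2])))"
definition "bex k n body = sg (bsum k n body)"
definition "ball k n body = anot (bex k n (anot body))"
definition "triT = Rec (V 0) Z (add (V 0) (S (V 1)))"
definition "pe a b = add (Call triT [add a b]) a"
definition "pow2T = Rec (V 0) (S Z) (add (V 0) (V 0))"
definition "pow2 a = Call pow2T [a]"

lemma rec_add: "rec_nat b (\<lambda>i r. Suc r) a = a + b" by (induction a) auto
lemma ev_add[simp]: "ev (add a b) xs = ev a xs + ev b xs"
  by (simp add: add_def addT_def rec_add)
lemma rec_mul: "rec_nat 0 (\<lambda>i r. r + b) a = a * b" by (induction a) auto
lemma ev_mul[simp]: "ev (mul a b) xs = ev a xs * ev b xs"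
  by (simp add: mul_def mulT_def rec_mul)
lemma rec_pred: "rec_nat 0 (\<lambda>i r. i) a = a - 1" by (induction a) auto
lemma ev_predT[simp]: "ev predT [a] = a - 1"
  by (simp add: predT_def rec_pred)
lemma rec_sub: "rec_nat a (\<lambda>i r. r - Suc 0) b = a - b" by (induction b) auto
lemma ev_sub[simp]: "ev (sub a b) xs = ev a xs - ev b xs"
  by (simp add: sub_def subT_def rec_sub)
lemma ev_cst[simp]: "ev (cst c) xs = c" by (induction c) auto
lemma ev_sg[simp]: "ev (sg a) xs = (if ev a xs = 0 then 0 else 1)"
  by (simp add: sg_def)
lemma ev_lt[simp]: "ev (lt a b) xs = (if ev a xs < ev b xs then 1 else 0)"
  by (simp add: lt_def)
lemma ev_eqe[simp]: "ev (eqe a b) xs = (if ev a xs = ev b xs then 1 else 0)"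
  by (simp add: eqe_def)
definition "bl P = (if P then 1 else (0::nat))"
lemma bl_simps[simp]: "bl P = 0 \<longleftrightarrow> \<not> P" "bl P = 1 \<longleftrightarrow> P" "bl P \<noteq> 0 \<longleftrightarrow> P"
  by (auto simp: bl_def)
lemma ev_aand[simp]: "ev (aand a b) xs = ev a xs * ev b xs"
  by (simp add: aand_def)
lemma ev_aor[simp]: "ev (aor a b) xs = (if ev a xs + ev b xs = 0 then 0 else 1)"
  by (simp add: aor_def)
lemma ev_anot[simp]: "ev (anot a) xs = 1 - ev a xs"
  by (simp add: anot_def)
lemma map_V: "length xs = k \<Longrightarrow> map ((\<lambda>a. ev a (r # i # xs)) \<circ> V) [Suc 0..<Suc (Suc k)] = i # xs"
proof -
  assume "length xs = k"
  have "[Suc 0..<Suc (Suc k)] = map Suc [0..<length (i # xs)]" using \<open>length xs = k\<close>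
    by (simp add: map_Suc_upt)
  moreover have "map ((\<lambda>a. ev a (r # i # xs)) \<circ> V \<circ> Suc) [0..<Suc (length xs)] = i # xs"
  proof (rule nth_equalityI)
    fix j assume "j < length (map ((\<lambda>a. ev a (r # i # xs)) \<circ> V \<circ> Suc) [0..<Suc (length xs)])"
    then show "map ((\<lambda>a. ev a (r # i # xs)) \<circ> V \<circ> Suc) [0..<Suc (length xs)] ! j = (i # xs) ! j"
      by (simp del: upt_Suc)
  qed simp
  ultimately show ?thesis by (simp del: upt_Suc)
qed
lemma rec_bsum: "rec_nat 0 (\<lambda>i r. r + f i) n = (\<Sum>i<n. f i)" by (induction n) auto
lemma ev_bsum[simp]: "length xs = k \<Longrightarrow> ev (bsum k n body) xs = (\<Sum>i<ev n xs. ev body (i # xs))"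
  by (simp add: bsum_def map_V rec_bsum del: upt_Suc)
definition "tv e xs \<longleftrightarrow> ev e xs \<noteq> 0"
lemma tv_simps[simp]:
  "tv (aand a b) xs \<longleftrightarrow> tv a xs \<and> tv b xs"
  "tv (aor a b) xs \<longleftrightarrow> tv a xs \<or> tv b xs"
  "tv (anot a) xs \<longleftrightarrow> \<not> tv a xs"
  "tv (eqe c d) xs \<longleftrightarrow> ev c xs = ev d xs"
  "tv (lt c d) xs \<longleftrightarrow> ev c xs < ev d xs"
  by (auto simp: tv_def)
lemma tv_bex[simp]: "length xs = k \<Longrightarrow> tv (bex k n body) xs \<longleftrightarrow> (\<exists>i<ev n xs. tv body (i # xs))"
  by (auto simp: tv_def bex_def)
lemma tv_ball[simp]: "length xs = k \<Longrightarrow> tv (ball k n body) xs \<longleftrightarrow> (\<forall>i<ev n xs. tv body (i # xs))"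
  by (auto simp: ball_def)
lemma wfe_simps[simp]:
  "wfe k (add a b) \<longleftrightarrow> wfe k a \<and> wfe k b"
  "wfe k (mul a b) \<longleftrightarrow> wfe k a \<and> wfe k b"
  "wfe k (sub a b) \<longleftrightarrow> wfe k a \<and> wfe k b"
  "wfe k (sg a) \<longleftrightarrow> wfe k a"
  "wfe k (lt a b) \<longleftrightarrow> wfe k a \<and> wfe k b"
  "wfe k (eqe a b) \<longleftrightarrow> wfe k a \<and> wfe k b"
  "wfe k (aand a b) \<longleftrightarrow> wfe k a \<and> wfe k b"
  "wfe k (aor a b) \<longleftrightarrow> wfe k a \<and> wfe k b"
  "wfe k (anot a) \<longleftrightarrow> wfe k a"
  "wfe k (cst c)"
  "wfe k (pe a b) \<longleftrightarrow> wfe k a \<and> wfe k b"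
  "wfe k (pow2 a) \<longleftrightarrow> wfe k a"
  by (induction c) (auto simp: add_def addT_def mul_def mulT_def sub_def subT_def predT_def sg_def lt_def
     eqe_def aand_def aor_def anot_def pe_def triT_def pow2_def pow2T_def)

lemma wfe_bsum[simp]: "k' = k \<Longrightarrow> wfe k (bsum k' n body) \<longleftrightarrow> wfe k n \<and> wfe (Suc k) body"
  by (auto simp: bsum_def simp del: upt_Suc)
lemma wfe_bex[simp]: "k' = k \<Longrightarrow> wfe k (bex k' n body) \<longleftrightarrow> wfe k n \<and> wfe (Suc k) body"
  by (auto simp: bex_def)
lemma wfe_ball[simp]: "k' = k \<Longrightarrow> wfe k (ball k' n body) \<longleftrightarrow> wfe k n \<and> wfe (Suc k) body"
  by (auto simp: ball_def)

lemma rec_tri: "rec_nat 0 (\<lambda>i r. Suc (r + i)) n = triangle n" by (induction n) auto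
lemma ev_pe[simp]: "ev (pe a b) xs = prod_encode (ev a xs, ev b xs)"
  by (simp add: pe_def triT_def rec_tri prod_encode_def)
lemma rec_pow2: "rec_nat (Suc 0) (\<lambda>i r. r + r) n = 2 ^ n" by (induction n) auto
lemma ev_pow2[simp]: "ev (pow2 a) xs = 2 ^ ev a xs"
  by (simp add: pow2_def pow2T_def rec_pow2)

lemma ce_ex:
  assumes "wfe 2 p"
  shows "ce {x. \<exists>y. tv p [y, x]}"
proof -
  let ?g = "cmp 2 (anot p)"
  have c: "\<And>y x. eval ?g [y, x] (ev (anot p) [y, x])"
    by (rule cmp_correct) (use assms in auto)
  have "{x. \<exists>y. tv p [y, x]} = {x. \<exists>y. eval (Minim ?g) [x] y}"
  proof (intro set_eqI iffI; simp)
    fix x assume "\<exists>y. tv p [y, x]"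
    then obtain y where y: "tv p [y, x]" and ymin: "\<And>u. u < y \<Longrightarrow> \<not> tv p [u, x]"
      using exists_least_iff[of "\<lambda>y. tv p [y, x]"] by blast
    have "eval ?g [y, x] 0" using c[of y x] y by (simp add: tv_def)
    moreover have "\<forall>u<y. \<exists>v. v \<noteq> 0 \<and> eval ?g [u, x] v"
    proof (intro allI impI)
      fix u assume "u < y"
      then have "ev (anot p) [u, x] = 1" using ymin[of u] by (simp add: tv_def)
      then show "\<exists>v. v \<noteq> 0 \<and> eval ?g [u, x] v" using c[of u x] by (intro exI[of _ 1]) simp
    qed
    ultimately show "\<exists>y. eval (Minim ?g) [x] y" by (blast intro: eval_Minim)
  next
    fix x assume "\<exists>y. eval (Minim ?g) [x] y"
    then obtain y where "eval (Minim ?g) [x] y" by blast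
    then have "eval ?g [y, x] 0" by (blast elim: MinimE)
    then have "ev (anot p) [y, x] = 0" using c[of y x] eval_det by blast
    then have "tv p [y, x]" by (simp add: tv_def)
    then show "\<exists>y. tv p [y, x]" by blast
  qed
  then show ?thesis unfolding ce_def by blast
qed


lemma tv_Call[simp]: "tv (Call f as) xs \<longleftrightarrow> tv f (map (\<lambda>a. ev a xs) as)"
  by (simp add: tv_def)

lemma ev_bex[simp]: "length xs = k \<Longrightarrow> ev (bex k n body) xs = (if \<exists>i<ev n xs. tv body (i # xs) then 1 else 0)"
  using tv_bex[of xs k n body] unfolding tv_def bex_def by auto

definition "hasT = bex 2 (S (V 0)) (bex 3 (pow2 (V 2))
   (eqe (V 2) (add (add (mul (V 1) (pow2 (S (V 3)))) (pow2 (V 3))) (V 0))))"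
definition "pfstT = bsum 1 (S (V 0)) (mul (V 0) (bex 2 (S (V 1)) (eqe (pe (V 1) (V 0)) (V 2))))"
definition "psndT = bsum 1 (S (V 0)) (mul (V 0) (bex 2 (S (V 1)) (eqe (pe (V 0) (V 1)) (V 2))))"
definition "itrT = Rec (V 0) (V 1) (Call psndT [V 0])"
definition "compT m = add (mul (lt (V 0) (cst m)) (Call pfstT [Call itrT [V 0, V 1]]))
                          (mul (anot (lt (V 0) (cst m))) (Call itrT [V 0, V 1]))"

lemma bit_iff: "s \<in> set_decode u \<longleftrightarrow> (\<exists>q<Suc u. \<exists>r<2^s. u = q * 2 ^ Suc s + 2 ^ s + r)"
proof
  assume "s \<in> set_decode u"
  then have o: "odd (u div 2^s)" by (simp add: set_decode_def)
  define d where "d = u div 2^s"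
  define r where "r = u mod 2^s"
  obtain q where q: "d = 2 * q + 1" using o unfolding d_def by (metis oddE)
  have u: "u = d * 2^s + r" unfolding d_def r_def by (simp add: div_mult_mod_eq)
  have "u = q * 2 ^ Suc s + 2 ^ s + r" using u q by (simp add: algebra_simps)
  moreover have "r < 2^s" unfolding r_def by simp
  moreover have "q < Suc u" using q u by (metis add_lessD1 le_add1 le_imp_less_Suc less_Suc_eq_le
        mult.commute mult_le_mono2 nat_mult_1 one_le_numeral le_trans one_le_power add_leE)
  ultimately show "\<exists>q<Suc u. \<exists>r<2^s. u = q * 2 ^ Suc s + 2 ^ s + r" by blast
next
  assume "\<exists>q<Suc u. \<exists>r<2^s. u = q * 2 ^ Suc s + 2 ^ s + r"
  then obtain q r where r: "r < 2^s" and u: "u = q * 2 ^ Suc s + 2 ^ s + r" by blast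
  have "u = r + (2 * q + 1) * 2^s" using u by (simp add: algebra_simps)
  then have "u div 2^s = (2 * q + 1) + r div 2^s" using div_mult_self1[of "2^s::nat" r "2 * q + 1"] by simp
  then have "u div 2^s = 2 * q + 1" using r by simp
  then show "s \<in> set_decode u" by (simp add: set_decode_def)
qed

lemma tv_hasT[simp]: "tv hasT [u, s] \<longleftrightarrow> s \<in> set_decode u"
  unfolding hasT_def bit_iff by (simp add: algebra_simps)

lemma sum_single: "c < n \<Longrightarrow> (\<Sum>b<n. b * (if b = c then 1 else 0)) = (c::nat)"
proof -
  assume "c < n"
  have "(\<Sum>b<n. b * (if b = c then 1 else 0)) = (\<Sum>b<n. if b = c then b else 0)"
    by (rule sum.cong) auto
  also have "\<dots> = c" using \<open>c < n\<close> by (simp add: sum.delta')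
  finally show ?thesis .
qed

lemma ev_pfstT[simp]: "ev pfstT [x] = fst (prod_decode x)"
proof -
  have e: "\<And>a. (\<exists>b<Suc x. prod_encode (a, b) = x) \<longleftrightarrow> a = fst (prod_decode x)"
  proof
    fix a assume "\<exists>b<Suc x. prod_encode (a, b) = x"
    then obtain b where "prod_encode (a, b) = x" by blast
    then show "a = fst (prod_decode x)" by (metis fst_conv prod_encode_inverse)
  next
    fix a assume "a = fst (prod_decode x)"
    then show "\<exists>b<Suc x. prod_encode (a, b) = x" using pd_le(2)[of x]
      by (intro exI[of _ "snd (prod_decode x)"]) auto
  qed
  have "ev pfstT [x] = (\<Sum>a<Suc x. a * (if \<exists>b<Suc x. prod_encode (a, b) = x then 1 else 0))"
    unfolding pfstT_def by (simp del: sum.lessThan_Suc)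
  also have "\<dots> = (\<Sum>a<Suc x. a * (if a = fst (prod_decode x) then 1 else 0))" using e by simp
  also have "\<dots> = fst (prod_decode x)" using pd_le(1)[of x] by (intro sum_single) simp
  finally show ?thesis .
qed

lemma ev_psndT[simp]: "ev psndT [x] = snd (prod_decode x)"
proof -
  have e: "\<And>b. (\<exists>a<Suc x. prod_encode (a, b) = x) \<longleftrightarrow> b = snd (prod_decode x)"
  proof
    fix b assume "\<exists>a<Suc x. prod_encode (a, b) = x"
    then obtain a where "prod_encode (a, b) = x" by blast
    then show "b = snd (prod_decode x)" by (metis snd_conv prod_encode_inverse)
  next
    fix b assume "b = snd (prod_decode x)"
    then show "\<exists>a<Suc x. prod_encode (a, b) = x" using pd_le(1)[of x]
      by (intro exI[of _ "fst (prod_decode x)"]) auto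
  qed
  have "ev psndT [x] = (\<Sum>b<Suc x. b * (if \<exists>a<Suc x. prod_encode (a, b) = x then 1 else 0))"
    unfolding psndT_def by (simp del: sum.lessThan_Suc)
  also have "\<dots> = (\<Sum>b<Suc x. b * (if b = snd (prod_decode x) then 1 else 0))" using e by simp
  also have "\<dots> = snd (prod_decode x)" using pd_le(2)[of x] by (intro sum_single) simp
  finally show ?thesis .
qed

lemma rec_itr: "rec_nat e (\<lambda>i r. snd (prod_decode r)) n = ((\<lambda>x. snd (prod_decode x)) ^^ n) e"
  by (induction n) auto

lemma ev_itrT[simp]: "ev itrT [i, e] = ((\<lambda>x. snd (prod_decode x)) ^^ i) e"
  unfolding itrT_def by (simp add: rec_itr)

lemma tdec_nth_itr: "i \<le> m \<Longrightarrow> tdec m e ! i =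
   (if i < m then fst (prod_decode (((\<lambda>x. snd (prod_decode x)) ^^ i) e)) else ((\<lambda>x. snd (prod_decode x)) ^^ i) e)"
proof (induction m arbitrary: i e)
  case 0 then show ?case by simp
next
  case (Suc m)
  show ?case
  proof (cases i)
    case 0 then show ?thesis by simp
  next
    case (Suc i')
    then have "i' \<le> m" using Suc.prems by simp
    then show ?thesis using Suc.IH[of i' "snd (prod_decode e)"] \<open>i = Suc i'\<close>
      by (simp add: funpow_Suc_right del: funpow.simps)
  qed
qed

lemma ev_compT[simp]: "i \<le> m \<Longrightarrow> ev (compT m) [i, e] = tdec m e ! i"
  unfolding compT_def using tdec_nth_itr[of i m e] by (auto simp: tv_def)


definition "cmpE m i e = Call (compT m) [i, e]"
definition "hasE u s = Call hasT [u, s]"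
definition "eqS x y = mul (cst 4) (pe x y)"
definition "ltS x y = add (mul (cst 4) (pe x y)) (cst 1)"
definition "nltS x y = add (mul (cst 4) (pe x y)) (cst 3)"

lemma ev_cmpE[simp]: "ev i xs \<le> m \<Longrightarrow> ev (cmpE m i e) xs = tdec m (ev e xs) ! ev i xs"
  by (simp add: cmpE_def)
lemma tv_hasE[simp]: "tv (hasE u s) xs \<longleftrightarrow> ev s xs \<in> set_decode (ev u xs)"
  by (simp add: hasE_def)
lemma ev_S[simp]: "ev (eqS x y) xs = scode (Eq (ev x xs) (ev y xs))"
  "ev (ltS x y) xs = scode (Less (ev x xs) (ev y xs))"
  "ev (nltS x y) xs = scode (NLess (ev x xs) (ev y xs))"
  by (simp_all add: eqS_def ltS_def nltS_def)

definition "domT m = aand (ball 2 (S (cst m)) (hasE (V 1) (eqS (cmpE m (V 0) (V 2)) (cmpE m (V 0) (V 2)))))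
   (bex 2 (cmpE m (cst 0) (V 1)) (bex 3 (cmpE m (cst 0) (V 2))
     (aand (hasE (V 2) (eqS (V 1) (V 1))) (aand (hasE (V 2) (eqS (V 0) (V 0)))
       (ball 4 (S (cst m)) (aor (eqe (V 0) (cst 0))
          (aand (aor (eqe (V 2) (cmpE m (V 0) (V 4))) (hasE (V 3) (ltS (V 2) (cmpE m (V 0) (V 4)))))
                (aor (eqe (cmpE m (V 0) (V 4)) (V 1)) (hasE (V 3) (ltS (cmpE m (V 0) (V 4)) (V 1)))))))))))"

lemma tv_domT[simp]: "tv (domT m) [u, e] \<longleftrightarrow> domH m (\<lambda>p. scode p \<in> set_decode u) e"
  unfolding domT_def domH_def by (simp add: less_Suc_eq_le)

definition "lexltT m = bex 3 (S (cst m)) (aand (ball 4 (V 0) (eqe (cmpE m (V 0) (V 3)) (cmpE m (V 0) (V 4))))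
   (hasE (V 1) (ltS (cmpE m (V 0) (V 2)) (cmpE m (V 0) (V 3)))))"

lemma tv_lexltT[simp]: "tv (lexltT m) [u, a, b] \<longleftrightarrow> lexltH m (\<lambda>p. scode p \<in> set_decode u) a b"
  unfolding lexltT_def lexltH_def by (auto simp: less_Suc_eq_le)

definition "lexgeT m = aor (eqe (V 1) (V 2)) (bex 3 (S (cst m))
   (aand (ball 4 (V 0) (eqe (cmpE m (V 0) (V 3)) (cmpE m (V 0) (V 4))))
     (aand (anot (eqe (cmpE m (V 0) (V 2)) (cmpE m (V 0) (V 3))))
       (hasE (V 1) (nltS (cmpE m (V 0) (V 2)) (cmpE m (V 0) (V 3)))))))"

lemma tv_lexgeT[simp]: "tv (lexgeT m) [u, a, b] \<longleftrightarrow> lexgeH m (\<lambda>p. scode p \<in> set_decode u) a b"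
  unfolding lexgeT_def lexgeH_def by (auto simp: less_Suc_eq_le)

lemma scode_sent_decode[simp]: "scode (sent_decode n) = n"
proof -
  obtain a b where ab: "prod_decode (n div 4) = (a, b)" by (cases "prod_decode (n div 4)")
  have pe: "prod_encode (a, b) = n div 4" using ab by (metis prod_decode_inverse)
  have n: "n = 4 * (n div 4) + n mod 4" by simp
  have "n mod 4 < 4" by simp
  then consider "n mod 4 = 0" | "n mod 4 = 1" | "n mod 4 = 2" | "n mod 4 = 3" by linarith
  then show ?thesis
  proof cases
    case 1 then show ?thesis using ab pe n by (simp add: sent_decode_def)
  next
    case 2 then show ?thesis using ab pe n by (simp add: sent_decode_def)
  next
    case 3 then show ?thesis using ab pe n by (simp add: sent_decode_def)
  next
    case 4 then show ?thesis using ab pe n by (simp add: sent_decode_def)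
  qed
qed

definition "okT m = bex 2 (S (V 1)) (bex 3 (S (V 0)) (bex 4 (S (V 1))
  (aand (eqe (V 2) (pe (V 1) (V 0)))
    (aor (aor (aand (eqe (V 4) (mul (cst 4) (V 2))) (aand (eqe (V 1) (V 0)) (Call (domT m) [V 3, V 1])))
              (aand (eqe (V 4) (add (mul (cst 4) (V 2)) (cst 1)))
                 (aand (Call (domT m) [V 3, V 1]) (aand (Call (domT m) [V 3, V 0]) (Call (lexltT m) [V 3, V 1, V 0])))))
         (aor (aand (eqe (V 4) (add (mul (cst 4) (V 2)) (cst 2)))
                 (aand (anot (eqe (V 1) (V 0))) (aand (Call (domT m) [V 3, V 1]) (Call (domT m) [V 3, V 0]))))
              (aand (eqe (V 4) (add (mul (cst 4) (V 2)) (cst 3)))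
                 (aand (Call (domT m) [V 3, V 1]) (aand (Call (domT m) [V 3, V 0]) (Call (lexgeT m) [V 3, V 1, V 0])))))))))"

lemma tv_okT_raw: "tv (okT m) [u, v] \<longleftrightarrow> (\<exists>p<Suc v. \<exists>a<Suc p. \<exists>b<Suc p. p = prod_encode (a, b) \<and>
   ((v = 4 * p \<and> a = b \<and> domH m (\<lambda>p. scode p \<in> set_decode u) a) \<or>
    (v = 4 * p + 1 \<and> okH m (\<lambda>p. scode p \<in> set_decode u) (Less a b)) \<or>
    (v = 4 * p + 2 \<and> okH m (\<lambda>p. scode p \<in> set_decode u) (NEq a b)) \<or>
    (v = 4 * p + 3 \<and> okH m (\<lambda>p. scode p \<in> set_decode u) (NLess a b))))"
  unfolding okT_def by auto

lemma eq4: "4 * p + t' = 4 * q + t \<Longrightarrow> t' < 4 \<Longrightarrow> t < 4 \<Longrightarrow> p = q \<and> t' = (t::nat)"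
  by presburger

lemma okT_gen:
  assumes v: "v = 4 * prod_encode (a0, b0) + t" and t: "t < 4"
  shows "tv (okT m) [u, v] \<longleftrightarrow>
    ((t = 0 \<and> a0 = b0 \<and> domH m (\<lambda>p. scode p \<in> set_decode u) a0) \<or>
    (t = 1 \<and> okH m (\<lambda>p. scode p \<in> set_decode u) (Less a0 b0)) \<or>
    (t = 2 \<and> okH m (\<lambda>p. scode p \<in> set_decode u) (NEq a0 b0)) \<or>
    (t = 3 \<and> okH m (\<lambda>p. scode p \<in> set_decode u) (NLess a0 b0)))" (is "_ \<longleftrightarrow> ?R")
proof -
  let ?H = "\<lambda>p. scode p \<in> set_decode u"
  let ?P = "\<lambda>p a b. p = prod_encode (a, b) \<and>
   ((v = 4 * p \<and> a = b \<and> domH m ?H a) \<or>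
    (v = 4 * p + 1 \<and> okH m ?H (Less a b)) \<or>
    (v = 4 * p + 2 \<and> okH m ?H (NEq a b)) \<or>
    (v = 4 * p + 3 \<and> okH m ?H (NLess a b)))"
  have "(\<exists>p<Suc v. \<exists>a<Suc p. \<exists>b<Suc p. ?P p a b) \<longleftrightarrow> ?R"
  proof
    assume "\<exists>p<Suc v. \<exists>a<Suc p. \<exists>b<Suc p. ?P p a b"
    then obtain p a b where P: "?P p a b" by blast
    have k: "\<And>t'. t' < 4 \<Longrightarrow> v = 4 * p + t' \<Longrightarrow> a = a0 \<and> b = b0 \<and> t' = t"
    proof -
      fix t' assume "t' < 4" "v = 4 * p + t'"
      then have "p = prod_encode (a0, b0) \<and> t' = t" using eq4[of p t' "prod_encode (a0, b0)" t] v t by simp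
      then show "a = a0 \<and> b = b0 \<and> t' = t" using P by simp
    qed
    from P have "(v = 4 * p \<and> a = b \<and> domH m ?H a) \<or>
      (v = 4 * p + 1 \<and> okH m ?H (Less a b)) \<or>
      (v = 4 * p + 2 \<and> okH m ?H (NEq a b)) \<or>
      (v = 4 * p + 3 \<and> okH m ?H (NLess a b))" by blast
    then show ?R
    proof (elim disjE conjE)
      assume "v = 4 * p" "a = b" "domH m ?H a"
      then show ?R using k[of 0] by simp
    next
      assume "v = 4 * p + 1" "okH m ?H (Less a b)"
      then show ?R using k[of 1] by simp
    next
      assume "v = 4 * p + 2" "okH m ?H (NEq a b)"
      then show ?R using k[of 2] by simp
    next
      assume "v = 4 * p + 3" "okH m ?H (NLess a b)"
      then show ?R using k[of 3] by simp
    qed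
  next
    assume r: ?R
    have b: "prod_encode (a0, b0) < Suc v" "a0 < Suc (prod_encode (a0, b0))" "b0 < Suc (prod_encode (a0, b0))"
      using v le_prod_encode_1[of a0 b0] le_prod_encode_2[of b0 a0] by auto
    have "?P (prod_encode (a0, b0)) a0 b0" using r v by auto
    then show "\<exists>p<Suc v. \<exists>a<Suc p. \<exists>b<Suc p. ?P p a b" using b by blast
  qed
  then show ?thesis using tv_okT_raw[of m u v] by simp
qed

lemma tv_okT': "tv (okT m) [u, scode q] \<longleftrightarrow> okH m (\<lambda>p. scode p \<in> set_decode u) q"
proof (cases q)
  case (Eq a b) then show ?thesis using okT_gen[of "scode q" a b 0 m u] by simp
next
  case (Less a b) then show ?thesis using okT_gen[of "scode q" a b 1 m u] by simp
next
  case (NEq a b) then show ?thesis using okT_gen[of "scode q" a b 2 m u] by simp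
next
  case (NLess a b) then show ?thesis using okT_gen[of "scode q" a b 3 m u] by simp
qed

lemma tv_okT: "tv (okT m) [u, v] \<longleftrightarrow> okH m (\<lambda>p. scode p \<in> set_decode u) (sent_decode v)"
  using tv_okT'[of m u "sent_decode v"] by (simp only: scode_sent_decode)

definition "PT m = bex 2 (S (V 1)) (bex 3 (S (V 2)) (aand (eqe (V 3) (pe (V 1) (V 0))) (Call (okT m) [V 1, V 0])))"

lemma tv_PT: "tv (PT m) [y, w] \<longleftrightarrow> w \<in> Wset m"
proof -
  have "tv (PT m) [y, w] \<longleftrightarrow> (\<exists>u<Suc w. \<exists>v<Suc w. w = prod_encode (u, v) \<and>
      okH m (\<lambda>p. scode p \<in> set_decode u) (sent_decode v))"
    unfolding PT_def by (simp add: tv_okT)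
  also have "\<dots> \<longleftrightarrow> okH m (\<lambda>p. scode p \<in> set_decode (fst (prod_decode w))) (sent_decode (snd (prod_decode w)))"
  proof
    assume "\<exists>u<Suc w. \<exists>v<Suc w. w = prod_encode (u, v) \<and> okH m (\<lambda>p. scode p \<in> set_decode u) (sent_decode v)"
    then obtain u v where "w = prod_encode (u, v)" "okH m (\<lambda>p. scode p \<in> set_decode u) (sent_decode v)" by blast
    then show "okH m (\<lambda>p. scode p \<in> set_decode (fst (prod_decode w))) (sent_decode (snd (prod_decode w)))" by simp
  next
    assume a: "okH m (\<lambda>p. scode p \<in> set_decode (fst (prod_decode w))) (sent_decode (snd (prod_decode w)))"
    have "fst (prod_decode w) < Suc w" "snd (prod_decode w) < Suc w" using pd_le[of w] by auto
    moreover have "w = prod_encode (fst (prod_decode w), snd (prod_decode w))" by simp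
    ultimately show "\<exists>u<Suc w. \<exists>v<Suc w. w = prod_encode (u, v) \<and> okH m (\<lambda>p. scode p \<in> set_decode u) (sent_decode v)"
      using a by blast
  qed
  finally show ?thesis unfolding Wset_def by simp
qed

lemma wfe_Call[simp]: "wfe k (Call f as) \<longleftrightarrow> wfe (length as) f \<and> (\<forall>a\<in>set as. wfe k a)"
  by simp

lemma wfe_hasT[simp]: "k = 2 \<Longrightarrow> wfe k hasT" by (simp add: hasT_def)
lemma wfe_pfstT[simp]: "k = 1 \<Longrightarrow> wfe k pfstT" by (simp add: pfstT_def)
lemma wfe_psndT[simp]: "k = 1 \<Longrightarrow> wfe k psndT" by (simp add: psndT_def)
lemma wfe_itrT[simp]: "k = 2 \<Longrightarrow> wfe k itrT" by (simp add: itrT_def)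
lemma wfe_compT[simp]: "k = 2 \<Longrightarrow> wfe k (compT m)" by (simp add: compT_def)
lemma wfe_E[simp]: "wfe k (cmpE m i e) \<longleftrightarrow> wfe k i \<and> wfe k e"
  "wfe k (hasE x y) \<longleftrightarrow> wfe k x \<and> wfe k y"
  "wfe k (eqS x y) \<longleftrightarrow> wfe k x \<and> wfe k y"
  "wfe k (ltS x y) \<longleftrightarrow> wfe k x \<and> wfe k y"
  "wfe k (nltS x y) \<longleftrightarrow> wfe k x \<and> wfe k y"
  by (auto simp: cmpE_def hasE_def eqS_def ltS_def nltS_def)
lemma wfe_domT[simp]: "k = 2 \<Longrightarrow> wfe k (domT m)" by (simp add: domT_def)
lemma wfe_lexltT[simp]: "k = 3 \<Longrightarrow> wfe k (lexltT m)" by (simp add: lexltT_def)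
lemma wfe_lexgeT[simp]: "k = 3 \<Longrightarrow> wfe k (lexgeT m)" by (simp add: lexgeT_def)
lemma wfe_okT[simp]: "k = 2 \<Longrightarrow> wfe k (okT m)" by (simp add: okT_def)
lemma wfe_PT: "wfe 2 (PT m)" by (simp add: PT_def)

lemma ce_W: "ce (Wset m)"
proof -
  have "Wset m = {w. \<exists>y. tv (PT m) [y, w]}" using tv_PT by auto
  then show ?thesis using ce_ex[OF wfe_PT] by simp
qed


lemma iso_sym: "iso A B \<Longrightarrow> iso B A"
proof -
  assume "iso A B"
  then obtain f where f: "bij_betw f (fst A) (fst B)"
    "\<forall>x\<in>fst A. \<forall>y\<in>fst A. (x, y) \<in> snd A \<longleftrightarrow> (f x, f y) \<in> snd B" unfolding iso_def by blast
  let ?g = "inv_into (fst A) f"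
  have g: "bij_betw ?g (fst B) (fst A)" using f(1) by (rule bij_betw_inv_into)
  have "\<forall>x\<in>fst B. \<forall>y\<in>fst B. (x, y) \<in> snd B \<longleftrightarrow> (?g x, ?g y) \<in> snd A"
  proof (intro ballI)
    fix x y assume xy: "x \<in> fst B" "y \<in> fst B"
    then have "?g x \<in> fst A" "?g y \<in> fst A" "f (?g x) = x" "f (?g y) = y"
      using g f(1) bij_betw_inv_into_right[OF f(1)] unfolding bij_betw_def by auto
    then show "(x, y) \<in> snd B \<longleftrightarrow> (?g x, ?g y) \<in> snd A" using f(2) by metis
  qed
  then show ?thesis unfolding iso_def using g by blast
qed

lemma iso_trans: "iso A B \<Longrightarrow> iso B C \<Longrightarrow> iso A C"
proof -
  assume "iso A B" "iso B C"
  then obtain f g where f: "bij_betw f (fst A) (fst B)"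
    "\<forall>x\<in>fst A. \<forall>y\<in>fst A. (x, y) \<in> snd A \<longleftrightarrow> (f x, f y) \<in> snd B"
    and g: "bij_betw g (fst B) (fst C)"
    "\<forall>x\<in>fst B. \<forall>y\<in>fst B. (x, y) \<in> snd B \<longleftrightarrow> (g x, g y) \<in> snd C" unfolding iso_def by blast
  have "bij_betw (g \<circ> f) (fst A) (fst C)" using f(1) g(1) by (rule bij_betw_trans)
  moreover have "\<forall>x\<in>fst A. \<forall>y\<in>fst A. (x, y) \<in> snd A \<longleftrightarrow> ((g \<circ> f) x, (g \<circ> f) y) \<in> snd C"
  proof (intro ballI)
    fix x y assume xy: "x \<in> fst A" "y \<in> fst A"
    then have "f x \<in> fst B" "f y \<in> fst B" using f(1) unfolding bij_betw_def by auto
    then show "(x, y) \<in> snd A \<longleftrightarrow> ((g \<circ> f) x, (g \<circ> f) y) \<in> snd C" using f(2) g(2) xy by simp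
  qed
  ultimately show ?thesis unfolding iso_def by blast
qed

lemma diag_eq_iso: "diag A = diag B \<Longrightarrow> iso A B"
proof -
  assume d: "diag A = diag B"
  obtain D R where A: "A = (D, R)" by (cases A)
  obtain D' R' where B: "B = (D', R')" by (cases B)
  have DD: "D = D'"
  proof
    show "D \<subseteq> D'" using d unfolding A B by (auto dest: arg_cong[where f = "\<lambda>X. X"]) (metis diag_simps(1))
  next
    show "D' \<subseteq> D" using d unfolding A B by (auto dest: arg_cong[where f = "\<lambda>X. X"]) (metis diag_simps(1))
  qed
  have "\<forall>x\<in>D. \<forall>y\<in>D. (x, y) \<in> R \<longleftrightarrow> (x, y) \<in> R'"
  proof (intro ballI)
    fix x y assume "x \<in> D" "y \<in> D"
    then show "(x, y) \<in> R \<longleftrightarrow> (x, y) \<in> R'"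
      using d DD diag_simps(3)[of x y D R] diag_simps(3)[of x y D' R'] unfolding A B by auto
  qed
  then show ?thesis unfolding iso_def A B DD by (auto intro: exI[of _ id])
qed

definition "hasleast A \<longleftrightarrow> (\<exists>x\<in>fst A. \<forall>y\<in>fst A. y \<noteq> x \<longrightarrow> (x, y) \<in> snd A)"

lemma iso_hasleast: "iso A B \<Longrightarrow> hasleast A \<Longrightarrow> hasleast B"
proof -
  assume "iso A B" "hasleast A"
  then obtain f x where f: "bij_betw f (fst A) (fst B)"
    "\<forall>x\<in>fst A. \<forall>y\<in>fst A. (x, y) \<in> snd A \<longleftrightarrow> (f x, f y) \<in> snd B"
    and x: "x \<in> fst A" "\<forall>y\<in>fst A. y \<noteq> x \<longrightarrow> (x, y) \<in> snd A" unfolding iso_def hasleast_def by blast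
  have "\<forall>y\<in>fst B. y \<noteq> f x \<longrightarrow> (f x, y) \<in> snd B"
  proof (intro ballI impI)
    fix y assume y: "y \<in> fst B" "y \<noteq> f x"
    then obtain z where z: "z \<in> fst A" "y = f z" using f(1) unfolding bij_betw_def by auto
    then have "z \<noteq> x" using y by auto
    then show "(f x, y) \<in> snd B" using x z f(2) by auto
  qed
  moreover have "f x \<in> fst B" using f(1) x unfolding bij_betw_def by auto
  ultimately show ?thesis unfolding hasleast_def by blast
qed

lemma lexl_repl: "length y = k \<Longrightarrow> y \<noteq> replicate k 0 \<Longrightarrow> lexl lessr (replicate k 0) y"
proof (induction k arbitrary: y)
  case 0 then show ?case by simp
next
  case (Suc k)
  then obtain a y' where y: "y = a # y'" by (cases y) auto
  then show ?case using Suc by (cases a) (auto simp: lessr_def)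
qed

lemma hasleast_omega: "hasleast (omega_pow k)"
proof -
  have "\<forall>y\<in>fst (omega_pow k). y \<noteq> replicate k 0 \<longrightarrow> (replicate k 0, y) \<in> snd (omega_pow k)"
    using lexl_repl by (auto simp: omega_pow_def opr_lexl simp del: omega_pow_rel.simps)
  moreover have "replicate k 0 \<in> fst (omega_pow k)" by (simp add: omega_pow_def)
  ultimately show ?thesis unfolding hasleast_def by blast
qed

lemma not_hasleast_rev: "k \<ge> 1 \<Longrightarrow> \<not> hasleast (rev_order (omega_pow k))"
proof
  assume k: "k \<ge> 1" and h: "hasleast (rev_order (omega_pow k))"
  then obtain z where z: "length z = k" "\<forall>y. length y = k \<longrightarrow> y \<noteq> z \<longrightarrow> (y, z) \<in> omega_pow_rel k"
    unfolding hasleast_def rev_order_def omega_pow_def by auto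
  obtain a r where zr: "z = a # r" using z(1) k by (cases z) auto
  let ?z' = "Suc a # r"
  have "(?z', z) \<in> omega_pow_rel k" using z zr by auto
  moreover have "(z, ?z') \<in> omega_pow_rel k" using z zr k
    by (simp del: omega_pow_rel.simps add: opr_lexl lessr_def)
  ultimately show False using slin_asym[OF slin_omega[of k], of z ?z'] z(1) zr
    by (simp add: omega_pow_def del: omega_pow_rel.simps)
qed

lemma not_iso_rev: "k \<ge> 1 \<Longrightarrow> \<not> iso (omega_pow k) (rev_order (omega_pow k))"
  using iso_hasleast hasleast_omega not_hasleast_rev by blast

lemma slin_iso: "iso (D, R) B \<Longrightarrow> slin (fst B) (snd B) \<Longrightarrow> slin D R"
proof -
  assume "iso (D, R) B" "slin (fst B) (snd B)"
  then obtain f where f: "bij_betw f D (fst B)" "\<forall>x\<in>D. \<forall>y\<in>D. (x, y) \<in> R \<longleftrightarrow> (f x, f y) \<in> snd B"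
    unfolding iso_def by auto
  show ?thesis
    by (rule slin_pull[OF \<open>slin (fst B) (snd B)\<close>, where h = f]) (use f in \<open>auto simp: bij_betw_def\<close>)
qed

lemma slin_conv: "slin A r \<Longrightarrow> slin A (r\<inverse>)"
  unfolding slin_def by blast

lemma class_slin: "A \<in> cls (omega_pow 2) (rev_order (omega_pow 2)) \<Longrightarrow> slin (fst A) (snd A)"
proof -
  assume a: "A \<in> cls (omega_pow 2) (rev_order (omega_pow 2))"
  obtain D R where A: "A = (D, R)" by (cases A)
  have s1: "slin (fst (omega_pow 2)) (snd (omega_pow 2))" by (rule slin_omega)
  have s2: "slin (fst (rev_order (omega_pow 2))) (snd (rev_order (omega_pow 2)))"
    using slin_conv[OF s1] by (simp add: rev_order_def)
  have "iso A (omega_pow 2) \<or> iso A (rev_order (omega_pow 2))" using a unfolding cls_def by auto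
  then show ?thesis
  proof
    assume "iso A (omega_pow 2)"
    then show ?thesis using slin_iso[of D R "omega_pow 2"] s1 A by simp
  next
    assume "iso A (rev_order (omega_pow 2))"
    then show ?thesis using slin_iso[of D R "rev_order (omega_pow 2)"] s2 A by simp
  qed
qed

lemma Tstr_class:
  assumes "n \<ge> 2" "A \<in> cls (omega_pow 2) (rev_order (omega_pow 2))"
  shows "(iso A (omega_pow 2) \<longrightarrow> iso (Tstr (n - 2) A) (omega_pow n)) \<and>
         (iso A (rev_order (omega_pow 2)) \<longrightarrow> iso (Tstr (n - 2) A) (rev_order (omega_pow n)))"
proof -
  obtain D R where A: "A = (D, R)" by (cases A)
  have nn: "n - 2 + 2 = n" using assms(1) by simp
  have c1: "iso A (omega_pow 2) \<longrightarrow> iso (Tstr (n - 2) A) (omega_pow n)"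
    using Tstr_omega[of D R "n - 2"] nn unfolding A by simp
  have c2: "iso A (rev_order (omega_pow 2)) \<longrightarrow> iso (Tstr (n - 2) A) (rev_order (omega_pow n))"
  proof
    assume "iso A (rev_order (omega_pow 2))"
    then have "iso (rev_order A) (omega_pow 2)" using iso_rev rev_rev by metis
    moreover have "rev_order A = (D, R\<inverse>)" unfolding A rev_order_def by simp
    ultimately have "iso (Tstr (n - 2) (rev_order A)) (omega_pow n)" using Tstr_omega[of D "R\<inverse>" "n - 2"] nn by simp
    then have "iso (rev_order (Tstr (n - 2) A)) (omega_pow n)" by (simp add: Tstr_rev)
    then show "iso (Tstr (n - 2) A) (rev_order (omega_pow n))" using iso_rev rev_rev by metis
  qed
  show ?thesis using c1 c2 by blast
qed

lemma iso_class_gen: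
  fixes X Y :: "'a set \<times> ('a \<times> 'a) set" and U V :: "'b set \<times> ('b \<times> 'b) set"
  assumes x: "iso X U \<or> iso X V" and y: "iso Y U \<or> iso Y V" and uv: "\<not> iso U V"
  shows "iso X Y \<longleftrightarrow> ((iso X U \<and> iso Y U) \<or> (iso X V \<and> iso Y V))"
proof
  assume xy: "iso X Y"
  show "(iso X U \<and> iso Y U) \<or> (iso X V \<and> iso Y V)"
  proof (cases "iso X U")
    case True
    have "iso Y U"
    proof (rule ccontr)
      assume "\<not> iso Y U"
      then have "iso Y V" using y by blast
      have "iso U X" using True by (rule iso_sym)
      then have "iso U Y" using xy by (rule iso_trans)
      then have "iso U V" using \<open>iso Y V\<close> by (rule iso_trans)
      then show False using uv by blast
    qed
    then show ?thesis using True by blast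
  next
    case False
    then have xv: "iso X V" using x by blast
    have "iso Y V"
    proof (rule ccontr)
      assume "\<not> iso Y V"
      then have "iso Y U" using y by blast
      have "iso V X" using xv by (rule iso_sym)
      then have "iso V Y" using xy by (rule iso_trans)
      then have "iso V U" using \<open>iso Y U\<close> by (rule iso_trans)
      then show False using uv iso_sym by blast
    qed
    then show ?thesis using xv by blast
  qed
next
  assume "(iso X U \<and> iso Y U) \<or> (iso X V \<and> iso Y V)"
  then show "iso X Y"
  proof
    assume a: "iso X U \<and> iso Y U"
    then have "iso U Y" using iso_sym by blast
    then show ?thesis using a iso_trans by blast
  next
    assume a: "iso X V \<and> iso Y V"
    then have "iso V Y" using iso_sym by blast
    then show ?thesis using a iso_trans by blast
  qed
qed

lemma apply_diag:
  assumes "A \<in> cls (omega_pow 2) (rev_order (omega_pow 2))"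
  shows "apply_op (Gam m) (diag A) = diag (Tstr m A)"
proof -
  obtain D R where A: "A = (D, R)" by (cases A)
  have "slin D R" using class_slin[OF assms] A by simp
  then show ?thesis unfolding apply_Gam A using okH_diag by auto
qed

theorem corollary6p4:
  fixes n :: nat
  assumes "n \<ge> 2"
  shows "cls (omega_pow 2) (rev_order (omega_pow 2)) \<le>\<^sub>c cls (omega_pow n) (rev_order (omega_pow n))"
proof -
  let ?K0 = "cls (omega_pow 2) (rev_order (omega_pow 2))"
  let ?K1 = "cls (omega_pow n) (rev_order (omega_pow n))"
  let ?m = "n - 2"
  have en: "enum_op (Gam ?m)" unfolding enum_op_def Gam_def using ce_W by blast
  have img: "\<forall>A\<in>?K0. \<exists>B\<in>?K1. apply_op (Gam ?m) (diag A) = diag B"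
  proof
    fix A assume a: "A \<in> ?K0"
    have "Tstr ?m A \<in> ?K1" using Tstr_class[OF assms a] a unfolding cls_def by auto
    then show "\<exists>B\<in>?K1. apply_op (Gam ?m) (diag A) = diag B" using apply_diag[OF a] by blast
  qed
  have nr2: "\<not> iso (omega_pow 2) (rev_order (omega_pow 2))" by (rule not_iso_rev) simp
  have nrn: "\<not> iso (omega_pow n) (rev_order (omega_pow n))" by (rule not_iso_rev) (use assms in simp)
  have key: "\<And>A A'. A \<in> ?K0 \<Longrightarrow> apply_op (Gam ?m) (diag A) = diag A' \<Longrightarrow>
      (iso A (omega_pow 2) \<longleftrightarrow> iso A' (omega_pow n)) \<and>
      (iso A (rev_order (omega_pow 2)) \<longleftrightarrow> iso A' (rev_order (omega_pow n)))"
  proof -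
    fix A A' assume a: "A \<in> ?K0" and d: "apply_op (Gam ?m) (diag A) = diag A'"
    have iA': "iso A' (Tstr ?m A)" using d apply_diag[OF a] diag_eq_iso by metis
    have t: "iso A (omega_pow 2) \<longrightarrow> iso (Tstr ?m A) (omega_pow n)"
      "iso A (rev_order (omega_pow 2)) \<longrightarrow> iso (Tstr ?m A) (rev_order (omega_pow n))"
      using Tstr_class[OF assms a] by auto
    have cA: "iso A (omega_pow 2) \<or> iso A (rev_order (omega_pow 2))" using a unfolding cls_def by auto
    have f1: "iso A (omega_pow 2) \<Longrightarrow> iso A' (omega_pow n)" using t iA' iso_trans by blast
    have f2: "iso A (rev_order (omega_pow 2)) \<Longrightarrow> iso A' (rev_order (omega_pow n))" using t iA' iso_trans by blast
    have g1: "iso A' (omega_pow n) \<Longrightarrow> iso A (omega_pow 2)"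
    proof (rule ccontr)
      assume "iso A' (omega_pow n)" "\<not> iso A (omega_pow 2)"
      then have "iso A' (rev_order (omega_pow n))" using cA f2 by blast
      then show False using \<open>iso A' (omega_pow n)\<close> nrn iso_sym iso_trans by blast
    qed
    have g2: "iso A' (rev_order (omega_pow n)) \<Longrightarrow> iso A (rev_order (omega_pow 2))"
    proof (rule ccontr)
      assume "iso A' (rev_order (omega_pow n))" "\<not> iso A (rev_order (omega_pow 2))"
      then have "iso A' (omega_pow n)" using cA f1 by blast
      then show False using \<open>iso A' (rev_order (omega_pow n))\<close> nrn iso_sym iso_trans by blast
    qed
    show "(iso A (omega_pow 2) \<longleftrightarrow> iso A' (omega_pow n)) \<and>
      (iso A (rev_order (omega_pow 2)) \<longleftrightarrow> iso A' (rev_order (omega_pow n)))"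
      using f1 f2 g1 g2 by blast
  qed
  have isoeq: "\<forall>A\<in>?K0. \<forall>B\<in>?K0. \<forall>A' B'. apply_op (Gam ?m) (diag A) = diag A' \<longrightarrow> apply_op (Gam ?m) (diag B) = diag B'
        \<longrightarrow> (iso A B \<longleftrightarrow> iso A' B')"
  proof (intro ballI allI impI)
    fix A B A' B' assume a: "A \<in> ?K0" and b: "B \<in> ?K0"
      and da: "apply_op (Gam ?m) (diag A) = diag A'" and db: "apply_op (Gam ?m) (diag B) = diag B'"
    have cA: "iso A (omega_pow 2) \<or> iso A (rev_order (omega_pow 2))" using a unfolding cls_def by auto
    have cB: "iso B (omega_pow 2) \<or> iso B (rev_order (omega_pow 2))" using b unfolding cls_def by auto
    note kA = key[OF a da] and kB = key[OF b db]
    have cA': "iso A' (omega_pow n) \<or> iso A' (rev_order (omega_pow n))" using cA kA by blast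
    have cB': "iso B' (omega_pow n) \<or> iso B' (rev_order (omega_pow n))" using cB kB by blast
    show "iso A B \<longleftrightarrow> iso A' B'"
      using iso_class_gen[OF cA cB nr2] iso_class_gen[OF cA' cB' nrn] kA kB by blast
  qed
  show ?thesis unfolding comp_reducible_def comp_embedding_def using en img isoeq by blast
qed


end
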